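(* Let $T$ be a tree with at least two vertices. Then $\dim(T)=\mathrm{bdim}(T)$ if and only if one of the following holds: - $T\in\{P_2,P_3\}$; or - for some integer $x\ge3$, $T$ is obtained from the star $K_{1,x}$ by subdividing at most $x-1$ of its edges, each exactly once (each subdivided edge is replaced by a path with two edges).
   Context: $d(x,y)$ denotes graph distance. A set $S\subseteq V(G)$ is a resolving set if for all distinct $x,y$ there is $z\in S$ with $d(x,z)\ne d(y,z)$. $\dim(G)$ is the minimum size of a resolving set. For an integer $k\ge1$ let $d_k(x,y)=\min\{d(x,y),k+1\}$. A function $f:V(G)\to\mathbb{Z}_{\ge 0}$ is a resolving broadcast of $G$ if for all distinct $x,y\in V(G)$ there is $z\in V(G)$ with $f(z)=i>0$ and $d_i(x,z)\ne d_i(y,z)$. The broadcast dimension $\mathrm{bdim}(G)$ is the minimum of $\sum_{v\in V(G)}f(v)$ over all resolving broadcasts $f$ of $G$. *)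

theory Defs
  imports Main
begin

type_synonym 'a graph = "'a set \<times> ('a \<Rightarrow> 'a \<Rightarrow> bool)"

definition verts :: "'a graph \<Rightarrow> 'a set" where "verts G = fst G"
definition adj :: "'a graph \<Rightarrow> 'a \<Rightarrow> 'a \<Rightarrow> bool" where "adj G = snd G"

definition simple_graph :: "'a graph \<Rightarrow> bool" where
  "simple_graph G \<longleftrightarrow> finite (verts G) \<and>
     (\<forall>x y. adj G x y \<longrightarrow> x \<in> verts G \<and> y \<in> verts G) \<and>
     (\<forall>x y. adj G x y \<longrightarrow> adj G y x) \<and> (\<forall>x. \<not> adj G x x)"

definition walk :: "'a graph \<Rightarrow> 'a list \<Rightarrow> bool" where
  "walk G xs \<longleftrightarrow> xs \<noteq> [] \<and> set xs \<subseteq> verts G \<and>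
     (\<forall>i. Suc i < length xs \<longrightarrow> adj G (xs ! i) (xs ! Suc i))"

definition connected_graph :: "'a graph \<Rightarrow> bool" where
  "connected_graph G \<longleftrightarrow> (\<forall>x\<in>verts G. \<forall>y\<in>verts G.
     \<exists>xs. walk G xs \<and> hd xs = x \<and> last xs = y)"

definition has_cycle :: "'a graph \<Rightarrow> bool" where
  "has_cycle G \<longleftrightarrow> (\<exists>xs. walk G xs \<and> distinct xs \<and> length xs \<ge> 3 \<and> adj G (last xs) (hd xs))"

definition tree :: "'a graph \<Rightarrow> bool" where
  "tree G \<longleftrightarrow> simple_graph G \<and> verts G \<noteq> {} \<and> connected_graph G \<and> \<not> has_cycle G"

definition gdist :: "'a graph \<Rightarrow> 'a \<Rightarrow> 'a \<Rightarrow> nat" where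
  "gdist G x y = (LEAST n. \<exists>xs. walk G xs \<and> hd xs = x \<and> last xs = y \<and> length xs = Suc n)"

definition resolving_set :: "'a graph \<Rightarrow> 'a set \<Rightarrow> bool" where
  "resolving_set G S \<longleftrightarrow> S \<subseteq> verts G \<and>
     (\<forall>x\<in>verts G. \<forall>y\<in>verts G. x \<noteq> y \<longrightarrow> (\<exists>z\<in>S. gdist G x z \<noteq> gdist G y z))"

definition metric_dim :: "'a graph \<Rightarrow> nat" where
  "metric_dim G = (LEAST n. \<exists>S. resolving_set G S \<and> card S = n)"

definition trunc_dist :: "'a graph \<Rightarrow> nat \<Rightarrow> 'a \<Rightarrow> 'a \<Rightarrow> nat" where
  "trunc_dist G k x y = min (gdist G x y) (k + 1)"

text \<open>Resolving broadcast; f is a function V(G) \<rightarrow> nat (values outside V(G) are irrelevant).\<close>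
definition resolving_broadcast :: "'a graph \<Rightarrow> ('a \<Rightarrow> nat) \<Rightarrow> bool" where
  "resolving_broadcast G f \<longleftrightarrow>
     (\<forall>x\<in>verts G. \<forall>y\<in>verts G. x \<noteq> y \<longrightarrow>
        (\<exists>z\<in>verts G. f z > 0 \<and> trunc_dist G (f z) x z \<noteq> trunc_dist G (f z) y z))"

definition broadcast_dim :: "'a graph \<Rightarrow> nat" where
  "broadcast_dim G = (LEAST n. \<exists>f. resolving_broadcast G f \<and> (\<Sum>v\<in>verts G. f v) = n)"

definition graph_iso :: "'a graph \<Rightarrow> 'b graph \<Rightarrow> bool" where
  "graph_iso G H \<longleftrightarrow> (\<exists>f. bij_betw f (verts G) (verts H) \<and>
     (\<forall>x\<in>verts G. \<forall>y\<in>verts G. adj G x y \<longleftrightarrow> adj H (f x) (f y)))"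

definition path_graph :: "nat \<Rightarrow> nat graph" where
  "path_graph n = ({0..<n}, \<lambda>i j. i < n \<and> j < n \<and> (j = Suc i \<or> i = Suc j))"

text \<open>The star K_{1,x} with centre (0,0) and leaves (1,i), i = 1..x, in which each edge
  to a leaf (1,i) with i \<in> S is subdivided exactly once by a new vertex (2,i).\<close>
definition subdivided_star :: "nat \<Rightarrow> nat set \<Rightarrow> (nat \<times> nat) graph" where
  "subdivided_star x S =
    ({(0,0)} \<union> {(1,i) | i. i \<in> {1..x}} \<union> {(2,i) | i. i \<in> S \<inter> {1..x}},
     \<lambda>u v. (\<exists>i\<in>{1..x}. (i \<notin> S \<and> ({u,v} = {(0,0),(1,i)}))
                       \<or> (i \<in> S \<and> ({u,v} = {(0,0),(2,i)} \<or> {u,v} = {(2,i),(1,i)}))))"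

end

theory Submission
  imports Defs
begin

lemma pig1: assumes "n1 = x0 \<or> n1 \<in> A" "n2 = x0 \<or> n2 \<in> A" "n3 = x0 \<or> n3 \<in> A"
  "n1 \<noteq> n2" "n1 \<noteq> n3" "n2 \<noteq> n3" "\<And>u w. u \<in> A \<Longrightarrow> w \<in> A \<Longrightarrow> u = w" shows False
  using assms by metis
lemma pig2: assumes "n1 = x \<or> n1 = y \<or> n1 \<in> A" "n2 = x \<or> n2 = y \<or> n2 \<in> A" "n3 = x \<or> n3 = y \<or> n3 \<in> A"
  "n1 \<noteq> n2" "n1 \<noteq> n3" "n2 \<noteq> n3" "\<And>u w. u \<in> A \<Longrightarrow> w \<in> A \<Longrightarrow> u = w"
  shows "(x = n1 \<or> x = n2 \<or> x = n3) \<and> (y = n1 \<or> y = n2 \<or> y = n3) \<and> x \<noteq> y"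
  using assms by metis
lemma pig3: assumes "n1 = x \<or> n1 = y \<or> n1 \<in> A" "n2 = x \<or> n2 = y \<or> n2 \<in> A" "n3 = x \<or> n3 = y \<or> n3 \<in> A"
  "n1 \<noteq> n2" "n1 \<noteq> n3" "n2 \<noteq> n3"
  shows "n1 \<in> A \<or> n2 \<in> A \<or> n3 \<in> A"
  using assms by metis

lemma two_elems: assumes "card A \<ge> 2" shows "\<exists>a b. a \<in> A \<and> b \<in> A \<and> a \<noteq> b"
proof -
  have fin: "finite A" using assms card.infinite by fastforce
  have "A \<noteq> {}" using assms by auto
  then obtain a where a: "a \<in> A" by blast
  have "card (A - {a}) \<ge> 1" using assms fin a by simp
  hence "A - {a} \<noteq> {}" by (metis card.empty not_one_le_zero)
  thus ?thesis using a by blast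
qed

definition cc :: "'b graph \<Rightarrow> 'b \<Rightarrow> 'b \<Rightarrow> nat" where
  "cc H p r = (if p = r then 0 else if adj H p r then 1 else 2)"

definition ARs :: "'b graph \<Rightarrow> 'b set \<Rightarrow> bool" where
  "ARs H Q \<longleftrightarrow> Q \<subseteq> verts H \<and> (\<forall>p\<in>verts H. \<forall>q\<in>verts H. p \<noteq> q \<longrightarrow> (\<exists>r\<in>Q. cc H p r \<noteq> cc H q r))"

lemma iso_inv: assumes "bij_betw \<psi> (verts H) (verts G)"
  "\<And>p q. p \<in> verts H \<Longrightarrow> q \<in> verts H \<Longrightarrow> adj H p q \<longleftrightarrow> adj G (\<psi> p) (\<psi> q)"
  shows "graph_iso G H"
proof -
  let ?\<phi> = "inv_into (verts H) \<psi>"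
  have b: "bij_betw ?\<phi> (verts G) (verts H)" using bij_betw_inv_into[OF assms(1)] .
  have "adj G x y \<longleftrightarrow> adj H (?\<phi> x) (?\<phi> y)" if "x \<in> verts G" "y \<in> verts G" for x y
  proof -
    have "\<psi> (?\<phi> x) = x" "\<psi> (?\<phi> y) = y" using that assms(1)
      by (auto simp: bij_betw_def f_inv_into_f)
    moreover have "?\<phi> x \<in> verts H" "?\<phi> y \<in> verts H" using b that by (auto simp: bij_betw_def)
    ultimately show ?thesis using assms(2) by metis
  qed
  thus ?thesis unfolding graph_iso_def using b by blast
qed

lemma star_adj: "adj (subdivided_star x SS) p q \<longleftrightarrow> (\<exists>i\<in>{1..x}. (i \<notin> SS \<and> ((p=(0,0) \<and> q=(1,i)) \<or> (p=(1,i) \<and> q=(0,0)))) \<or>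
   (i \<in> SS \<and> ((p=(0,0) \<and> q=(2,i)) \<or> (p=(2,i) \<and> q=(0,0)) \<or> (p=(2,i) \<and> q=(1,i)) \<or> (p=(1,i) \<and> q=(2,i)))))"
  unfolding subdivided_star_def adj_def by (simp add: doubleton_eq_iff)

lemma star_verts: "verts (subdivided_star x SS) = {(0,0)} \<union> {(1,i) | i. i \<in> {1..x}} \<union> {(2,i) | i. i \<in> SS \<inter> {1..x}}"
  unfolding subdivided_star_def verts_def by simp

definition "gtop SS j = (if j \<in> SS then (2::nat) else 1, j)"

lemma star_cc: assumes "p \<in> verts (subdivided_star x SS)" "j \<in> {1..x}"
  shows "cc (subdivided_star x SS) p (gtop SS j) =
    (if p = (0,0) then 1 else if snd p = j then (if p = gtop SS j then 0 else 1) else 2)"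
proof -
  consider "p = (0,0)" | i where "i \<in> {1..x}" "p = (1,i)" | i where "i \<in> SS" "i \<in> {1..x}" "p = (2,i)"
    using assms(1) unfolding star_verts by blast
  thus ?thesis
  proof cases
    case 1 thus ?thesis using assms(2) unfolding cc_def gtop_def star_adj by auto
  next
    case (2 i) thus ?thesis using assms(2) unfolding cc_def gtop_def star_adj by auto
  next
    case (3 i) thus ?thesis using assms(2) unfolding cc_def gtop_def star_adj by auto
  qed
qed

lemma star_nc: assumes "p \<in> verts (subdivided_star x SS)" "p \<noteq> (0,0)"
  shows "snd p \<in> {1..x} \<and> (p = (1, snd p) \<or> (p = (2, snd p) \<and> snd p \<in> SS))"
  using assms unfolding star_verts by auto

lemma star_AR: assumes x3: "x \<ge> 3" and i0: "i0 \<in> {1..x}" "i0 \<notin> SS"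
  shows "ARs (subdivided_star x SS) (gtop SS ` ({1..x} - {i0}))" "card (gtop SS ` ({1..x} - {i0})) = x - 1"
proof -
  let ?H = "subdivided_star x SS"
  let ?J = "{1..x} - {i0}"
  have injg: "inj_on (gtop SS) ?J" unfolding inj_on_def gtop_def by auto
  have cJ: "card ?J = x - 1" using i0 by simp
  show "card (gtop SS ` ?J) = x - 1" using card_image[OF injg] cJ by simp
  have other: "\<exists>j\<in>?J. j \<noteq> k" for k
  proof -
    have "card (?J - {k}) \<ge> 1" using cJ x3 by (cases "k \<in> ?J") auto
    hence "?J - {k} \<noteq> {}" by (metis card.empty not_one_le_zero)
    thus ?thesis by blast
  qed
  have sub: "gtop SS ` ?J \<subseteq> verts ?H" unfolding star_verts gtop_def by (auto split: if_splits)
  have main: "\<exists>j\<in>?J. cc ?H p (gtop SS j) \<noteq> cc ?H q (gtop SS j)"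
    if pq: "p \<in> verts ?H" "q \<in> verts ?H" "p \<noteq> q" "p \<noteq> (0,0)" for p q
  proof -
    note np = star_nc[OF pq(1) pq(4)]
    show ?thesis
    proof (cases "q = (0,0)")
      case True
      obtain j where j: "j \<in> ?J" "j \<noteq> snd p" using other by blast
      thus ?thesis using star_cc[OF pq(1)] star_cc[OF pq(2)] True pq(4) by (intro bexI[of _ j]) auto
    next
      case False
      note nq = star_nc[OF pq(2) False]
      show ?thesis
      proof (cases "snd p = snd q")
        case True
        have iS: "snd p \<in> SS" and pq2: "p = gtop SS (snd p) \<or> q = gtop SS (snd p)"
          using np nq True pq(3) unfolding gtop_def by (metis prod.collapse)+
        have "snd p \<in> ?J" using iS i0 np by auto
        thus ?thesis using star_cc[OF pq(1)] star_cc[OF pq(2)] True pq(3,4) False pq2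
          by (intro bexI[of _ "snd p"]) auto
      next
        case False
        show ?thesis
        proof (cases "snd p = i0")
          case True
          hence "snd q \<in> ?J" using nq False by auto
          thus ?thesis using star_cc[OF pq(1)] star_cc[OF pq(2)] \<open>q \<noteq> (0,0)\<close> pq(4) False
            by (intro bexI[of _ "snd q"]) auto
        next
          case False
          hence "snd p \<in> ?J" using np by auto
          thus ?thesis using star_cc[OF pq(1)] star_cc[OF pq(2)] \<open>q \<noteq> (0,0)\<close> pq(4) \<open>snd p \<noteq> snd q\<close>
            by (intro bexI[of _ "snd p"]) auto
        qed
      qed
    qed
  qed
  show "ARs ?H (gtop SS ` ?J)"
    unfolding ARs_def
  proof (intro conjI sub ballI impI)
    fix p q assume pq: "p \<in> verts ?H" "q \<in> verts ?H" "p \<noteq> q"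
    show "\<exists>r\<in>gtop SS ` ?J. cc ?H p r \<noteq> cc ?H q r"
    proof (cases "p = (0,0)")
      case False thus ?thesis using main[OF pq False] by blast
    next
      case True
      hence "q \<noteq> (0,0)" using pq by simp
      thus ?thesis using main[OF pq(2,1) _] pq by (metis image_eqI)
    qed
  qed
qed


locale tr = fixes G :: "'a graph" assumes tree: "tree G"
begin

abbreviation "V \<equiv> verts G"
abbreviation "d \<equiv> gdist G"

lemma sg: "simple_graph G" using tree by (simp add: tree_def)
lemma finV: "finite V" using sg by (simp add: simple_graph_def)
lemma adjV: "adj G x y \<Longrightarrow> x \<in> V \<and> y \<in> V" using sg by (simp add: simple_graph_def)
lemma adj_sym: "adj G x y \<Longrightarrow> adj G y x" using sg by (simp add: simple_graph_def)
lemma adj_irr: "\<not> adj G x x" using sg by (simp add: simple_graph_def)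
lemma conn: "connected_graph G" using tree by (simp add: tree_def)
lemma nocyc: "\<not> has_cycle G" using tree by (simp add: tree_def)

lemma adj_comm: "adj G x y \<longleftrightarrow> adj G y x" using adj_sym by blast

lemma walk_iff: "walk G xs \<longleftrightarrow> xs \<noteq> [] \<and> set xs \<subseteq> V \<and> successively (adj G) xs"
  by (simp add: walk_def successively_conv_nth)

lemma gdist_ex: assumes "x \<in> V" "y \<in> V"
  shows "\<exists>xs. walk G xs \<and> hd xs = x \<and> last xs = y \<and> length xs = Suc (d x y)"
proof -
  obtain xs where xs: "walk G xs" "hd xs = x" "last xs = y"
    using conn assms unfolding connected_graph_def by blast
  hence "\<exists>n. \<exists>xs. walk G xs \<and> hd xs = x \<and> last xs = y \<and> length xs = Suc n"
    by (intro exI[of _ "length xs - 1"] exI[of _ xs]) (auto simp: walk_def)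
  thus ?thesis unfolding gdist_def by (rule LeastI_ex)
qed

lemma gdist_le: assumes "walk G xs" "hd xs = x" "last xs = y"
  shows "d x y \<le> length xs - 1"
  unfolding gdist_def
  by (rule Least_le) (use assms in \<open>auto simp: walk_def intro!: exI[of _ xs]\<close>)

lemma d_refl: "x \<in> V \<Longrightarrow> d x x = 0"
  using gdist_le[of "[x]" x x] by (simp add: walk_iff)

lemma d_eq0: assumes "x \<in> V" "y \<in> V" "d x y = 0" shows "x = y"
proof -
  obtain xs where "walk G xs" "hd xs = x" "last xs = y" "length xs = Suc 0"
    using gdist_ex[OF assms(1,2)] assms(3) by auto
  thus ?thesis by (cases xs) auto
qed

lemma d_adj: assumes "adj G x y" shows "d x y = 1"
proof -
  have "d x y \<le> 1" using gdist_le[of "[x,y]" x y] assms adjV by (simp add: walk_iff)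
  moreover have "d x y \<noteq> 0" using d_eq0 adjV[OF assms] adj_irr assms by blast
  ultimately show ?thesis by simp
qed

lemma d_one: assumes "x \<in> V" "y \<in> V" "d x y = 1" shows "adj G x y"
proof -
  obtain xs where xs: "walk G xs" "hd xs = x" "last xs = y" "length xs = 2"
    using gdist_ex[OF assms(1,2)] assms(3) by auto
  then obtain a b where "xs = [a,b]" by (cases xs; cases "tl xs") auto
  thus ?thesis using xs by (auto simp: walk_iff)
qed

lemma walk_rev: "walk G xs \<Longrightarrow> walk G (rev xs)"
  by (auto simp: walk_iff adj_sym elim: successively_mono)

lemma d_sym: assumes "x \<in> V" "y \<in> V" shows "d x y = d y x"
proof -
  have le: "d b a \<le> d a b" if ab: "a \<in> V" "b \<in> V" for a b
  proof -
    obtain xs where xs: "walk G xs" "hd xs = a" "last xs = b" "length xs = Suc (d a b)"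
      using gdist_ex ab by blast
    have "d b a \<le> length (rev xs) - 1"
      by (rule gdist_le) (use xs walk_rev in \<open>auto simp: hd_rev last_rev walk_def\<close>)
    thus ?thesis using xs by simp
  qed
  show ?thesis using le[of x y] le[of y x] assms by simp
qed

lemma walk_app: assumes "walk G xs" "walk G ys" "last xs = hd ys"
  shows "walk G (xs @ tl ys)"
proof -
  obtain y0 ys' where ys: "ys = y0 # ys'" using assms(2) by (cases ys) (auto simp: walk_iff)
  have "successively (adj G) (xs @ ys')"
    using assms ys by (cases ys') (auto simp: walk_iff successively_append_iff)
  thus ?thesis using assms ys by (auto simp: walk_iff)
qed

lemma d_tri: assumes "x \<in> V" "y \<in> V" "z \<in> V" shows "d x z \<le> d x y + d y z"
proof -
  obtain xs where xs: "walk G xs" "hd xs = x" "last xs = y" "length xs = Suc (d x y)"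
    using gdist_ex assms by blast
  obtain ys where ys: "walk G ys" "hd ys = y" "last ys = z" "length ys = Suc (d y z)"
    using gdist_ex assms by blast
  have w: "walk G (xs @ tl ys)" using walk_app xs ys by auto
  have "hd (xs @ tl ys) = x" using xs by (auto simp: walk_iff)
  moreover have "last (xs @ tl ys) = z" using xs ys
    by (cases ys; cases "tl ys") (auto simp: walk_iff)
  ultimately have "d x z \<le> length (xs @ tl ys) - 1" using gdist_le w by blast
  thus ?thesis using xs ys by simp
qed

lemma d_step: assumes "adj G x u" "z \<in> V" shows "d x z \<le> Suc (d u z)"
  using d_tri[of x u z] adjV[OF assms(1)] d_adj[OF assms(1)] assms(2) by simp

lemma first_step: assumes "x \<in> V" "y \<in> V" "x \<noteq> y"
  shows "\<exists>u. adj G x u \<and> Suc (d u y) = d x y"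
proof -
  obtain xs where xs: "walk G xs" "hd xs = x" "last xs = y" "length xs = Suc (d x y)"
    using gdist_ex assms by blast
  then obtain u rest where r: "xs = x # u # rest"
    using assms(3) by (cases xs; cases "tl xs") (auto simp: walk_iff)
  have a: "adj G x u" using xs r by (simp add: walk_iff)
  have "walk G (u # rest)" using xs r by (auto simp: walk_iff)
  moreover have "last (u#rest) = y" using xs r by simp
  ultimately have "d u y \<le> length (u#rest) - 1" using gdist_le by (metis list.sel(1))
  hence "Suc (d u y) \<le> d x y" using xs r by simp
  moreover have "d x y \<le> Suc (d u y)" using d_step a assms by blast
  ultimately show ?thesis using a by auto
qed

lemma succ_app: "successively P (xs @ ys) \<Longrightarrow> successively P xs \<and> successively P ys"
  by (simp add: successively_append_iff)

lemma succ_join: "successively P (xs @ [v]) \<Longrightarrow> successively P (v # ys) \<Longrightarrow> successively P (xs @ v # ys)"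
  by (induction xs rule: induct_list012) (auto simp: successively_Cons)

lemma short_mem: assumes "walk G xs" "hd xs = p" "last xs = y" "length xs = Suc (d p y)"
  "v \<in> set xs" "v \<noteq> p" shows "d v y < d p y"
proof -
  obtain A B where AB: "xs = A @ v # B" using split_list[OF assms(5)] by blast
  have "A \<noteq> []" using AB assms by auto
  have w: "walk G (v # B)" using assms(1) AB by (auto simp: walk_iff successively_append_iff)
  have "last (v # B) = y" using assms(3) AB by simp
  hence "d v y \<le> length B" using gdist_le[OF w] by simp
  moreover have "length A + length B = d p y" using AB assms(4) by simp
  moreover have "length A > 0" using \<open>A \<noteq> []\<close> by simp
  ultimately show ?thesis by linarith
qed

lemma short_distinct: assumes "walk G xs" "hd xs = p" "last xs = y" "length xs = Suc (d p y)"
  shows "distinct xs"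
proof (rule ccontr)
  assume "\<not> distinct xs"
  then obtain as v bs cs where dec: "xs = as @ [v] @ bs @ [v] @ cs" using not_distinct_decomp by blast
  let ?ys = "as @ [v] @ cs"
  have s: "successively (adj G) ((as @ [v]) @ (bs @ (v # cs)))" using assms(1) dec by (simp add: walk_iff)
  have s1: "successively (adj G) (as @ [v])" using succ_app[OF s] by simp
  have "successively (adj G) (v # cs)" using succ_app[OF s] succ_app[of _ bs "v # cs"] by blast
  hence "successively (adj G) ?ys" using succ_join[OF s1] by simp
  hence w: "walk G ?ys" using assms(1) dec by (auto simp: walk_iff)
  have "hd ?ys = p" using assms(2) dec by (cases as) auto
  moreover have "last ?ys = y" using assms(3) dec by (cases cs) auto
  ultimately have "d p y \<le> length ?ys - 1" using gdist_le[OF w] by blast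
  thus False using assms(4) dec by simp
qed

lemma cyc2: assumes "walk G P" "walk G Q" "distinct P" "distinct Q" "last P = last Q"
  "adj G (hd P) (hd Q)" "hd P \<notin> set Q" "hd Q \<notin> set P" shows False
proof -
  have "\<exists>m\<in>set P. m \<in> set Q" using assms(1,2,5) by (metis last_in_set walk_def)
  then obtain A m B where P: "P = A @ m # B" "m \<in> set Q" "\<forall>z\<in>set A. z \<notin> set Q"
    using split_list_first_prop[of P "\<lambda>z. z \<in> set Q"] by blast
  obtain C D where Q: "Q = C @ m # D" using split_list[OF P(2)] by blast
  have An: "A \<noteq> []" using P assms(7) by auto
  have Cn: "C \<noteq> []" using Q P assms(8) by auto
  let ?L = "A @ m # rev C"
  have s1: "successively (adj G) (A @ [m])" using assms(1) P(1)
    by (auto simp: walk_iff successively_append_iff)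
  have s2: "successively (adj G) (C @ [m])" using assms(2) Q
    by (auto simp: walk_iff successively_append_iff)
  have s2': "successively (adj G) (m # rev C)"
  proof -
    have "successively (\<lambda>x y. adj G y x) (C @ [m])" using s2 by (auto elim: successively_mono simp: adj_sym)
    hence "successively (adj G) (rev (C @ [m]))" by (simp only: successively_rev)
    thus ?thesis by simp
  qed
  have "successively (adj G) ?L" using s1 s2' An
    by (auto simp: successively_append_iff)
  moreover have "set ?L \<subseteq> V" using assms(1,2) P Q by (auto simp: walk_iff)
  ultimately have w: "walk G ?L" by (simp add: walk_iff)
  have "distinct ?L" using assms(3,4) P Q by auto
  moreover have "length ?L \<ge> 3" using An Cn by (cases A; cases C) auto
  moreover have "adj G (last ?L) (hd ?L)"
  proof -
    have "last ?L = hd Q" using Cn Q by (simp add: last_rev)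
    moreover have "hd ?L = hd P" using An P by simp
    ultimately show ?thesis using assms(6) adj_sym by simp
  qed
  ultimately have "has_cycle G" using w unfolding has_cycle_def by blast
  thus False using nocyc by simp
qed

lemma K: assumes "adj G c a" "y \<in> V" shows "d c y \<noteq> d a y"
proof
  assume eq: "d c y = d a y"
  have cV: "c \<in> V" and aV: "a \<in> V" using adjV assms by auto
  obtain P where P: "walk G P" "hd P = c" "last P = y" "length P = Suc (d c y)"
    using gdist_ex cV assms by blast
  obtain Q where Q: "walk G Q" "hd Q = a" "last Q = y" "length Q = Suc (d a y)"
    using gdist_ex aV assms by blast
  have "a \<notin> set P" using short_mem[OF P, of a] eq assms(1) adj_irr by auto
  moreover have "c \<notin> set Q" using short_mem[OF Q, of c] eq assms(1) adj_irr by auto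
  ultimately show False using cyc2[OF P(1) Q(1) short_distinct[OF P] short_distinct[OF Q]] P Q assms(1)
    by auto
qed

lemma Kd: assumes "adj G c a" "y \<in> V" shows "d a y = Suc (d c y) \<or> d c y = Suc (d a y)"
  using K[OF assms] d_step[OF assms] d_step[OF adj_sym[OF assms(1)] assms(2)] by linarith

lemma K2: assumes "adj G c a" "adj G c b" "a \<noteq> b" "y \<in> V" "d a y < d c y" "d b y < d c y"
  shows False
proof -
  have cV: "c \<in> V" and aV: "a \<in> V" and bV: "b \<in> V" using adjV assms by auto
  have ea: "d c y = Suc (d a y)" and eb: "d c y = Suc (d b y)" using Kd assms by fastforce+
  obtain P where P: "walk G P" "hd P = a" "last P = y" "length P = Suc (d a y)"
    using gdist_ex aV assms by blast
  obtain Q where Q: "walk G Q" "hd Q = b" "last Q = y" "length Q = Suc (d b y)"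
    using gdist_ex bV assms by blast
  have cQ: "c \<notin> set Q" using short_mem[OF Q, of c] eb assms(2) adj_irr by auto
  have aQ: "a \<notin> set Q" using short_mem[OF Q, of a] ea eb assms(3) by auto
  have cP: "c \<notin> set P" using short_mem[OF P, of c] ea assms(1) adj_irr by auto
  have wQ: "walk G (c # Q)" using Q assms(2) cV by (cases Q) (auto simp: walk_iff)
  have "distinct (c # Q)" using cQ short_distinct[OF Q] by simp
  moreover have "a \<notin> set (c # Q)" using aQ assms(1) adj_irr by auto
  moreover have "last (c # Q) = y" using Q by (cases Q) (auto simp: walk_iff)
  ultimately show False using cyc2[OF P(1) wQ short_distinct[OF P]] P Q cP adj_sym[OF assms(1)] by auto
qed

definition br :: "'a \<Rightarrow> 'a \<Rightarrow> 'a set" where "br c a = {y \<in> V. d a y < d c y}"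

lemma br_V: "y \<in> br c a \<Longrightarrow> y \<in> V" by (simp add: br_def)

lemma br_c: "c \<in> V \<Longrightarrow> c \<notin> br c a" by (simp add: br_def d_refl)

lemma br_a: "adj G c a \<Longrightarrow> a \<in> br c a"
  using adjV[of c a] d_refl[of a] d_adj[of c a] by (simp add: br_def)

lemma br_disj: "adj G c a \<Longrightarrow> adj G c b \<Longrightarrow> a \<noteq> b \<Longrightarrow> y \<in> br c a \<Longrightarrow> y \<notin> br c b"
  using K2 by (auto simp: br_def)

lemma br_cover: assumes "c \<in> V" "y \<in> V" "y \<noteq> c" shows "\<exists>a. adj G c a \<and> y \<in> br c a"
proof -
  obtain u where "adj G c u" "Suc (d u y) = d c y" using first_step assms by metis
  thus ?thesis using assms by (auto simp: br_def)
qed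

lemma br_dist: "adj G c a \<Longrightarrow> y \<in> br c a \<Longrightarrow> d c y = Suc (d a y)"
  using Kd by (fastforce simp: br_def)

lemma nbr_dist: "adj G c a \<Longrightarrow> y \<in> V \<Longrightarrow> y \<notin> br c a \<Longrightarrow> d a y = Suc (d c y)"
  using Kd by (fastforce simp: br_def)

lemma br_out: assumes "adj G c a" "y \<in> br c a" "adj G y y'" "y' \<notin> br c a"
  shows "y = a \<and> y' = c"
proof -
  have yV: "y \<in> V" and y'V: "y' \<in> V" using adjV assms(3) by auto
  have cV: "c \<in> V" and aV: "a \<in> V" using adjV assms(1) by auto
  have e1: "d c y = Suc (d a y)" using br_dist assms by blast
  have e2: "d a y' = Suc (d c y')" using nbr_dist assms y'V by blast
  have k1: "d y' c = Suc (d y c) \<or> d y c = Suc (d y' c)" by (rule Kd[OF assms(3) cV])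
  have k2: "d y' a = Suc (d y a) \<or> d y a = Suc (d y' a)" by (rule Kd[OF assms(3) aV])
  have q: "d c y = d y c" "d c y' = d y' c" "d a y = d y a" "d a y' = d y' a"
    using d_sym cV aV yV y'V by blast+
  have A: "d c y = Suc (d c y')" using k1 k2 e1 e2 q by (elim disjE; linarith)
  have B: "d a y' = Suc (d a y)" using k1 k2 e1 e2 q by (elim disjE; linarith)
  show ?thesis
  proof (cases "y = a")
    case True
    then have "d c y' = 0" using A d_adj[OF assms(1)] by simp
    hence "y' = c" using d_eq0 cV y'V by metis
    thus ?thesis using True by simp
  next
    case False
    then obtain u where u: "adj G y u" "Suc (d u a) = d y a" using first_step[OF yV aV False] by metis
    have uV: "u \<in> V" using adjV u by auto
    have "d c u \<le> d c a + d a u" using d_tri cV aV uV by blast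
    hence "d c u < d c y" using u e1 d_adj[OF assms(1)] d_sym[OF aV yV] d_sym[OF aV uV] by simp
    hence lt1: "d u c < d y c" using d_sym[OF cV yV] d_sym[OF cV uV] by simp
    have lt2: "d y' c < d y c" using A d_sym[OF cV yV] d_sym[OF cV y'V] by simp
    have "u = y'"
    proof (rule ccontr)
      assume "u \<noteq> y'"
      thus False using K2[OF u(1) assms(3) _ cV lt1 lt2] by simp
    qed
    hence "d a y' < d a y" using u d_sym[OF aV yV] d_sym[OF aV uV] by simp
    thus ?thesis using B by simp
  qed
qed

lemma br_nbr: "adj G c a \<Longrightarrow> y \<in> br c a \<Longrightarrow> adj G y y' \<Longrightarrow> y' \<in> br c a \<or> (y = a \<and> y' = c)"
  using br_out by blast

lemma through: assumes "adj G c a" "z \<in> br c a"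
  shows "w \<in> V \<Longrightarrow> w \<notin> br c a \<Longrightarrow> d w z = d w c + d c z"
proof (induction "d w z" arbitrary: w rule: less_induct)
  case less
  have cV: "c \<in> V" using adjV assms by auto
  have zV: "z \<in> V" using assms br_V by auto
  show ?case
  proof (cases "w = c")
    case True thus ?thesis using d_refl[OF cV] by simp
  next
    case False
    have wz: "w \<noteq> z" using less.prems assms by auto
    obtain w' where w': "adj G w w'" "Suc (d w' z) = d w z" using first_step[OF less.prems(1) zV wz] by blast
    have w'V: "w' \<in> V" using adjV w' by auto
    have nb: "w' \<notin> br c a"
    proof
      assume "w' \<in> br c a"
      hence "w' = a \<and> w = c" using br_out[OF assms(1) _ adj_sym[OF w'(1)]] less.prems by blast
      thus False using False by simp
    qed
    have lt: "d w' z < d w z" using w'(2) by simp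
    have ih: "d w' z = d w' c + d c z" using less.hyps[OF lt w'V nb] .
    have st: "d w c \<le> Suc (d w' c)" using d_step[OF w'(1) cV] .
    have tr: "d w z \<le> d w c + d c z" using d_tri[OF less.prems(1) cV zV] .
    show ?thesis using ih st tr w'(2) by linarith
  qed
qed

lemma par_aux: "even ((a::nat) + b + c) \<Longrightarrow> x = Suc a \<or> a = Suc x \<Longrightarrow> Suc c = y \<Longrightarrow> even (x + b + y)"
  by presburger

lemma parity: assumes "u \<in> V" "w \<in> V" "z \<in> V" shows "even (d u z + d w z + d u w)"
  using assms(1)
proof (induction "d u w" arbitrary: u rule: less_induct)
  case less
  show ?case
  proof (cases "u = w")
    case True thus ?thesis using d_refl less by simp
  next
    case False
    then obtain u' where u': "adj G u u'" "Suc (d u' w) = d u w" using first_step less assms by metis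
    have u'V: "u' \<in> V" using adjV u' by auto
    have "even (d u' z + d w z + d u' w)" using less.hyps[of u'] u' u'V by simp
    moreover have "d u z = Suc (d u' z) \<or> d u' z = Suc (d u z)" using Kd[OF u'(1) assms(3)] by auto
    ultimately show ?thesis using u' par_aux by metis
  qed
qed

lemma midpoint: assumes "u \<in> V" "w \<in> V" shows "j \<le> d u w \<Longrightarrow> \<exists>c\<in>V. d u c = j \<and> d c w = d u w - j"
proof (induction j)
  case 0 thus ?case using assms d_refl by auto
next
  case (Suc j)
  then obtain c where c: "c \<in> V" "d u c = j" "d c w = d u w - j" by auto
  have "c \<noteq> w" using c Suc.prems d_refl assms by auto
  then obtain c' where c': "adj G c c'" "Suc (d c' w) = d c w" using first_step c assms by metis
  have c'V: "c' \<in> V" using adjV c' by auto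
  have "d u c' \<le> Suc j" using d_tri[of u c c'] d_adj[OF c'(1)] c assms c'V by simp
  moreover have "d u w \<le> d u c' + d c' w" using d_tri assms c'V by blast
  ultimately show ?case using c c' c'V Suc.prems by (intro bexI[of _ c']) auto
qed

lemma crit: assumes "R \<subseteq> V" "R \<noteq> {}"
  "\<And>c a b. adj G c a \<Longrightarrow> adj G c b \<Longrightarrow> a \<noteq> b \<Longrightarrow> br c a \<inter> R \<noteq> {} \<or> br c b \<inter> R \<noteq> {}"
  shows "resolving_set G R"
  unfolding resolving_set_def
proof (intro conjI assms(1) ballI impI)
  fix u w assume uV: "u \<in> V" and wV: "w \<in> V" and uw: "u \<noteq> w"
  show "\<exists>z\<in>R. d u z \<noteq> d w z"
  proof (rule ccontr)
    assume "\<not> ?thesis"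
    hence eq: "\<And>z. z \<in> R \<Longrightarrow> d u z = d w z" by blast
    obtain z0 where z0: "z0 \<in> R" using assms(2) by blast
    have "even (d u w)" using parity[OF uV wV, of z0] eq[OF z0] z0 assms(1) by auto
    then obtain h where h: "d u w = 2 * h" by blast
    have "h \<noteq> 0"
    proof
      assume "h = 0" hence "d u w = 0" using h by simp
      thus False using d_eq0[OF uV wV] uw by simp
    qed
    obtain c where c: "c \<in> V" "d u c = h" "d c w = h" using midpoint[OF uV wV, of h] h by auto
    have cu: "c \<noteq> u" using c \<open>h \<noteq> 0\<close> d_refl uV by auto
    have cw: "c \<noteq> w" using c \<open>h \<noteq> 0\<close> d_refl wV by auto
    obtain a where a: "adj G c a" "Suc (d a u) = d c u" using first_step[OF c(1) uV cu] by metis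
    obtain b where b: "adj G c b" "Suc (d b w) = d c w" using first_step[OF c(1) wV cw] by metis
    have aV: "a \<in> V" and bV: "b \<in> V" using adjV a b by auto
    have dcu: "d c u = h" using c d_sym uV by simp
    have ua: "u \<in> br c a" using a uV by (simp add: br_def)
    have wb: "w \<in> br c b" using b wV by (simp add: br_def)
    have ab: "a \<noteq> b"
    proof
      assume "a = b"
      hence "d u w \<le> d u a + d a w" using d_tri uV aV wV by blast
      also have "\<dots> = (h - 1) + (h - 1)" using a b \<open>a = b\<close> dcu c d_sym uV aV by simp
      finally show False using h \<open>h \<noteq> 0\<close> by simp
    qed
    have E: "br c a \<inter> R = {}" if cab: "adj G c a" "adj G c b" "a \<noteq> b" "u \<in> br c a" "w \<in> br c b"
        "d u c = h" "d w c = h" "u \<in> V" "w \<in> V" "\<And>z. z \<in> R \<Longrightarrow> d u z = d w z" for a b u w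
    proof (rule ccontr)
      assume "br c a \<inter> R \<noteq> {}"
      then obtain z where z: "z \<in> br c a" "z \<in> R" by blast
      have zV: "z \<in> V" using z br_V by auto
      have aV: "a \<in> V" using adjV cab by auto
      have "w \<notin> br c a" using br_disj[OF cab(2,1)] cab by auto
      hence "d w z = h + d c z" using through[OF cab(1) z(1) cab(9)] cab by simp
      moreover have "d u z \<le> d u a + d a z" using d_tri cab aV zV by blast
      moreover have "d c z = Suc (d a z)" using br_dist cab z by blast
      moreover have "d c u = Suc (d a u)" using br_dist cab by blast
      moreover have "d u c = d c u" "d u a = d a u" using d_sym cab aV c by auto
      ultimately have "d u z < d w z" using cab(6) by linarith
      thus False using cab(10) z by simp
    qed
    have dwc: "d w c = h" using c(3) d_sym[OF wV c(1)] by simp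
    have eq': "\<And>z. z \<in> R \<Longrightarrow> d w z = d u z" using eq by metis
    have "br c a \<inter> R = {}" using E[OF a(1) b(1) ab ua wb c(2) dwc uV wV eq] .
    moreover have "br c b \<inter> R = {}" using E[OF b(1) a(1) ab[symmetric] wb ua dwc c(2) wV uV eq'] .
    ultimately show False using assms(3)[OF a(1) b(1) ab] by simp
  qed
qed

lemma trunc1: assumes "u \<in> V" "z \<in> V" shows "trunc_dist G 1 u z = cc G u z"
proof -
  have "d u z = 0 \<longleftrightarrow> u = z" using d_eq0[OF assms] d_refl[OF assms(1)] by auto
  moreover have "u \<noteq> z \<Longrightarrow> d u z = 1 \<longleftrightarrow> adj G u z" using d_one d_adj assms by blast
  ultimately show ?thesis unfolding trunc_dist_def cc_def by auto
qed

lemma V_res: "resolving_set G V"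
  unfolding resolving_set_def
proof (intro conjI subset_refl ballI impI)
  fix x y assume "x \<in> V" "y \<in> V" "x \<noteq> y"
  moreover have "d y x \<noteq> 0" using d_eq0[of y x] calculation by auto
  ultimately show "\<exists>z\<in>V. d x z \<noteq> d y z" using d_refl by (intro bexI[of _ x]) auto
qed

lemma dim_ex: "\<exists>R. resolving_set G R \<and> card R = metric_dim G"
  unfolding metric_dim_def by (rule LeastI_ex) (use V_res in blast)

lemma dim_le: "resolving_set G R \<Longrightarrow> metric_dim G \<le> card R"
  unfolding metric_dim_def by (rule Least_le) blast

lemma one_bc: "resolving_broadcast G (\<lambda>_. 1)"
  unfolding resolving_broadcast_def
proof (intro ballI impI)
  fix x y assume xy: "x \<in> V" "y \<in> V" "x \<noteq> y"
  show "\<exists>z\<in>V. 0 < (1::nat) \<and> trunc_dist G 1 x z \<noteq> trunc_dist G 1 y z"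
    using xy trunc1 by (intro bexI[of _ x]) (auto simp: cc_def)
qed

lemma bdim_ex: "\<exists>f. resolving_broadcast G f \<and> (\<Sum>v\<in>V. f v) = broadcast_dim G"
  unfolding broadcast_dim_def by (rule LeastI_ex) (use one_bc in blast)

lemma bdim_le: "resolving_broadcast G f \<Longrightarrow> broadcast_dim G \<le> (\<Sum>v\<in>V. f v)"
  unfolding broadcast_dim_def by (rule Least_le) blast

lemma supp_res: assumes "resolving_broadcast G f" shows "resolving_set G {v\<in>V. f v > 0}"
  unfolding resolving_set_def
proof (intro conjI ballI impI)
  show "{v \<in> V. 0 < f v} \<subseteq> V" by blast
  fix x y assume "x \<in> V" "y \<in> V" "x \<noteq> y"
  then obtain z where "z \<in> V" "f z > 0" "trunc_dist G (f z) x z \<noteq> trunc_dist G (f z) y z"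
    using assms unfolding resolving_broadcast_def by blast
  thus "\<exists>z\<in>{v \<in> V. 0 < f v}. d x z \<noteq> d y z" unfolding trunc_dist_def by auto
qed

lemma card_supp: "card {v\<in>V. f v > 0} \<le> (\<Sum>v\<in>V. f v)"
proof -
  have "card {v\<in>V. f v > 0} = (\<Sum>v\<in>{v\<in>V. f v > 0}. 1)" by simp
  also have "\<dots> \<le> (\<Sum>v\<in>{v\<in>V. f v > 0}. f v)" by (rule sum_mono) auto
  also have "\<dots> \<le> (\<Sum>v\<in>V. f v)" by (rule sum_mono2) (use finV in auto)
  finally show ?thesis .
qed

lemma dim_le_bdim: "metric_dim G \<le> broadcast_dim G"
proof -
  obtain f where f: "resolving_broadcast G f" "(\<Sum>v\<in>V. f v) = broadcast_dim G" using bdim_ex by blast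
  show ?thesis using dim_le[OF supp_res[OF f(1)]] card_supp[of f] f(2) by simp
qed

lemma ARs_res: assumes "ARs G S" shows "resolving_set G S"
  unfolding resolving_set_def
proof (intro conjI ballI impI)
  show "S \<subseteq> V" using assms by (simp add: ARs_def)
  fix x y assume xy: "x \<in> V" "y \<in> V" "x \<noteq> y"
  then obtain z where z: "z \<in> S" "cc G x z \<noteq> cc G y z" using assms xy unfolding ARs_def by blast
  have "z \<in> V" using z assms by (auto simp: ARs_def)
  thus "\<exists>z\<in>S. d x z \<noteq> d y z" using z trunc1 xy unfolding trunc_dist_def by (metis (no_types))
qed

lemma ARs_bc: assumes "ARs G Q"
  shows "resolving_broadcast G (\<lambda>v. if v \<in> Q then 1 else 0)" "(\<Sum>v\<in>V. (if v \<in> Q then 1 else 0)) = card Q"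
proof -
  have QV: "Q \<subseteq> V" using assms by (simp add: ARs_def)
  show "resolving_broadcast G (\<lambda>v. if v \<in> Q then 1 else 0)"
    unfolding resolving_broadcast_def
  proof (intro ballI impI)
    fix x y assume xy: "x \<in> V" "y \<in> V" "x \<noteq> y"
    then obtain z where z: "z \<in> Q" "cc G x z \<noteq> cc G y z" using assms xy unfolding ARs_def by blast
    thus "\<exists>z\<in>V. 0 < (if z \<in> Q then 1 else 0::nat) \<and>
       trunc_dist G (if z \<in> Q then 1 else 0) x z \<noteq> trunc_dist G (if z \<in> Q then 1 else 0) y z"
      using QV trunc1 xy by (intro bexI[of _ z]) auto
  qed
  show "(\<Sum>v\<in>V. (if v \<in> Q then 1 else 0)) = card Q"
    using QV finV by (simp add: sum.If_cases Int_absorb1)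
qed

lemma eq_from_AR: assumes "ARs G Q" "\<And>R. resolving_set G R \<Longrightarrow> card Q \<le> card R"
  shows "metric_dim G = broadcast_dim G"
proof -
  have "card Q \<le> metric_dim G" using dim_ex assms(2) by metis
  moreover have "broadcast_dim G \<le> card Q" using bdim_le[OF ARs_bc(1)[OF assms(1)]] ARs_bc(2)[OF assms(1)] by simp
  ultimately show ?thesis using dim_le_bdim by simp
qed

lemma eq_AR: assumes "metric_dim G = broadcast_dim G"
  shows "\<exists>S. ARs G S \<and> card S = metric_dim G"
proof -
  obtain f where f: "resolving_broadcast G f" "(\<Sum>v\<in>V. f v) = broadcast_dim G" using bdim_ex by blast
  define P where "P = {v\<in>V. f v > 0}"
  have PV: "P \<subseteq> V" and finP: "finite P" using finV by (auto simp: P_def intro: finite_subset)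
  have cP: "metric_dim G \<le> card P" using dim_le[OF supp_res[OF f(1)]] P_def by simp
  have sP: "(\<Sum>v\<in>V. f v) = (\<Sum>v\<in>P. f v)"
    by (rule sum.mono_neutral_right) (use finV in \<open>auto simp: P_def\<close>)
  have one: "f v = 1" if "v \<in> P" for v
  proof (rule ccontr)
    assume "f v \<noteq> 1"
    hence "f v \<ge> 2" using that by (auto simp: P_def)
    have "(\<Sum>u\<in>P. f u) = f v + (\<Sum>u\<in>P-{v}. f u)" using finP that by (simp add: sum.remove)
    moreover have "(\<Sum>u\<in>P-{v}. f u) \<ge> (\<Sum>u\<in>P-{v}. 1)" by (rule sum_mono) (auto simp: P_def)
    moreover have "card (P - {v}) = card P - 1" using that finP by simp
    moreover have "card P \<ge> 1" using that finP by (metis One_nat_def Suc_leI card_gt_0_iff empty_iff)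
    ultimately have "(\<Sum>u\<in>P. f u) \<ge> card P + 1" using \<open>f v \<ge> 2\<close> by simp
    thus False using sP f(2) assms cP by simp
  qed
  have "card P = (\<Sum>v\<in>P. f v)" using one by simp
  hence cardP: "card P = metric_dim G" using sP f(2) assms cP by simp
  have "ARs G P" unfolding ARs_def
  proof (intro conjI PV ballI impI)
    fix x y assume xy: "x \<in> V" "y \<in> V" "x \<noteq> y"
    then obtain z where z: "z \<in> V" "f z > 0" "trunc_dist G (f z) x z \<noteq> trunc_dist G (f z) y z"
      using f(1) unfolding resolving_broadcast_def by blast
    have "z \<in> P" using z by (simp add: P_def)
    hence "f z = 1" using one by blast
    thus "\<exists>z\<in>P. cc G x z \<noteq> cc G y z" using z \<open>z \<in> P\<close> trunc1 xy by metis
  qed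
  thus ?thesis using cardP by blast
qed

lemma far: assumes "adj G c a" "adj G c2 a2" "c \<in> br c2 a2" "c2 \<in> br c a" "y \<in> V" "y \<notin> br c a"
  shows "y \<in> br c2 a2"
proof -
  have cV: "c \<in> V" and c2V: "c2 \<in> V" and a2V: "a2 \<in> V" using adjV assms(1,2) by auto
  have e: "d y c2 = d y c + d c c2" using through[OF assms(1) assms(4) assms(5,6)] .
  have t: "d a2 y \<le> d a2 c + d c y" using d_tri[OF a2V cV assms(5)] .
  have l: "d a2 c < d c2 c" using assms(3) by (simp add: br_def)
  have q: "d y c2 = d c2 y" "d y c = d c y" "d c c2 = d c2 c" using d_sym assms(5) cV c2V by auto
  have "d a2 y < d c2 y" using e t l q by linarith
  thus ?thesis using assms(5) by (simp add: br_def)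
qed

lemma leaf_ex: assumes "V \<noteq> {}" shows "\<exists>l\<in>V. \<forall>u1 u2. adj G l u1 \<longrightarrow> adj G l u2 \<longrightarrow> u1 = u2"
proof -
  obtain r where r: "r \<in> V" using assms by blast
  define m where "m = Max (d r ` V)"
  have "m \<in> d r ` V" unfolding m_def using finV assms by (intro Max_in) auto
  then obtain l where l: "l \<in> V" "d r l = m" by blast
  have mx: "\<And>u. u \<in> V \<Longrightarrow> d r u \<le> d r l" using l finV unfolding m_def by auto
  have lt: "d u r < d l r" if "adj G l u" for u
  proof -
    have uV: "u \<in> V" using adjV that by auto
    have "d u r = Suc (d l r) \<or> d l r = Suc (d u r)" using Kd[OF that r] .
    moreover have "d r u \<le> d r l" using mx uV .
    moreover have "d r u = d u r" "d r l = d l r" using d_sym r uV l by auto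
    ultimately show ?thesis by linarith
  qed
  have "\<forall>u1 u2. adj G l u1 \<longrightarrow> adj G l u2 \<longrightarrow> u1 = u2"
  proof (intro allI impI)
    fix u1 u2 assume "adj G l u1" "adj G l u2"
    thus "u1 = u2" using K2[of l u1 u2 r] lt r by blast
  qed
  thus ?thesis using l by blast
qed

lemma tri: assumes "adj G x y" "adj G y z" "adj G z x" "x \<noteq> z" shows False
proof -
  have "walk G [x,y,z]" using assms adjV by (auto simp: walk_iff)
  moreover have "distinct [x,y,z]" using assms adj_irr by auto
  ultimately have "has_cycle G" using assms(3) unfolding has_cycle_def by (intro exI[of _ "[x,y,z]"]) auto
  thus False using nocyc by simp
qed

lemma star_iso: assumes ceV: "ce \<in> V" and zN: "z \<in> {a. adj G ce a}" and c3: "card {a. adj G ce a} \<ge> 3"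
  and PN: "P \<subseteq> {a. adj G ce a} - {z}"
  and leafs: "\<forall>a\<in>{a. adj G ce a} - P. \<forall>u. adj G a u \<longrightarrow> u = ce"
  and subd: "\<forall>a\<in>P. adj G a (ch a) \<and> ch a \<noteq> ce \<and> (\<forall>u. adj G a u \<longrightarrow> u = ce \<or> u = ch a) \<and> (\<forall>u. adj G (ch a) u \<longrightarrow> u = a)"
  and cover: "V = {ce} \<union> {a. adj G ce a} \<union> ch ` P"
  shows "\<exists>x SS. x \<ge> 3 \<and> SS \<subseteq> {1..x} \<and> card SS \<le> x - 1 \<and> graph_iso G (subdivided_star x SS)"
proof -
  define N where "N = {a. adj G ce a}"
  have "N \<subseteq> V" using adjV unfolding N_def by auto
  hence finN: "finite N" using finV finite_subset by blast
  define x where "x = card N"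
  obtain h where h: "bij_betw h {1..x} N" using ex_bij_betw_nat_finite_1[OF finN] unfolding x_def by blast
  have hN: "i \<in> {1..x} \<Longrightarrow> h i \<in> N" for i using bij_betwE[OF h] by blast
  have hinj: "i \<in> {1..x} \<Longrightarrow> j \<in> {1..x} \<Longrightarrow> h i = h j \<longleftrightarrow> i = j" for i j
    using bij_betw_imp_inj_on[OF h] unfolding inj_on_def by blast
  define SS where "SS = {i\<in>{1..x}. h i \<in> P}"
  have T1: "adj G ce u \<longleftrightarrow> u \<in> N" for u by (simp add: N_def)
  have T2: "adj G a u \<longleftrightarrow> u = ce" if aN: "a \<in> N" "a \<notin> P" for a u
  proof
    assume "adj G a u" thus "u = ce" using leafs aN unfolding N_def by blast
  next
    assume "u = ce" thus "adj G a u" using aN(1) adj_sym unfolding N_def by simp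
  qed
  have T3: "adj G a u \<longleftrightarrow> u = ce \<or> u = ch a" if aP: "a \<in> P" for a u
  proof
    assume "adj G a u" thus "u = ce \<or> u = ch a" using subd aP by blast
  next
    have "adj G ce a" using aP PN by blast
    moreover have "adj G a (ch a)" using subd aP by blast
    ultimately show "u = ce \<or> u = ch a \<Longrightarrow> adj G a u" using adj_sym by blast
  qed
  have T4: "adj G (ch a) u \<longleftrightarrow> u = a" if aP: "a \<in> P" for a u
  proof
    assume "adj G (ch a) u" thus "u = a" using subd aP by blast
  next
    have "adj G a (ch a)" using subd aP by blast
    thus "u = a \<Longrightarrow> adj G (ch a) u" using adj_sym by blast
  qed
  have PN': "a \<in> P \<Longrightarrow> a \<in> N" for a using PN N_def by blast
  have ceN: "ce \<notin> N" using adj_irr N_def by blast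
  have chN: "a \<in> P \<Longrightarrow> ch a \<notin> N" for a
  proof
    assume "a \<in> P" "ch a \<in> N"
    hence "adj G (ch a) ce" using adj_sym N_def by blast
    hence "ce = a" using T4 \<open>a \<in> P\<close> by blast
    thus False using PN' \<open>a \<in> P\<close> ceN by blast
  qed
  have chce: "a \<in> P \<Longrightarrow> ch a \<noteq> ce" for a using subd by blast
  have chinj: "a \<in> P \<Longrightarrow> b \<in> P \<Longrightarrow> ch a = ch b \<longleftrightarrow> a = b" for a b
    using T4 T3 by metis
  define \<psi> where "\<psi> p = (if fst p = 0 then ce else if fst p = 1 \<and> h (snd p) \<notin> P then h (snd p)
      else if fst p = 1 then ch (h (snd p)) else h (snd p))" for p :: "nat \<times> nat"
  let ?H = "subdivided_star x SS"
  have vH: "p \<in> verts ?H \<longleftrightarrow> p = (0,0) \<or> (\<exists>i\<in>{1..x}. p = (1,i)) \<or> (\<exists>i\<in>SS. p = (2,i))" for p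
    unfolding star_verts SS_def by auto
  have p0: "\<psi> (0,0) = ce" by (simp add: \<psi>_def)
  have p1: "\<psi> (1,i) = (if h i \<in> P then ch (h i) else h i)" for i by (simp add: \<psi>_def)
  have p2: "\<psi> (2,i) = h i" for i by (simp add: \<psi>_def)
  have SSx: "i \<in> SS \<longleftrightarrow> i \<in> {1..x} \<and> h i \<in> P" for i by (simp add: SS_def)
  have sym: "adj ?H p q \<longleftrightarrow> adj ?H q p" for p q unfolding star_adj by blast
  have R: "adj ?H p q \<longleftrightarrow> adj G (\<psi> p) (\<psi> q)" if "p \<in> verts ?H" "q \<in> verts ?H" for p q
  proof -
    have key: "adj ?H p q \<longleftrightarrow> adj G (\<psi> p) (\<psi> q)"
      if pq: "p \<in> verts ?H" "q \<in> verts ?H" "fst p \<le> fst q" for p q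
    proof -
      consider "p = (0,0)" "q = (0,0)" | j where "p = (0,0)" "j \<in> {1..x}" "q = (1,j)"
        | j where "p = (0,0)" "j \<in> SS" "q = (2,j)"
        | i j where "i \<in> {1..x}" "p = (1,i)" "j \<in> {1..x}" "q = (1,j)"
        | i j where "i \<in> {1..x}" "p = (1,i)" "j \<in> SS" "q = (2,j)"
        | i j where "i \<in> SS" "p = (2,i)" "j \<in> SS" "q = (2,j)"
        using pq unfolding vH by auto
      thus ?thesis
      proof cases
        case 1 thus ?thesis by (simp add: star_adj p0 adj_irr)
      next
        case (2 j)
        have "adj ?H p q \<longleftrightarrow> j \<notin> SS" using 2 by (auto simp: star_adj)
        moreover have "adj G (\<psi> p) (\<psi> q) \<longleftrightarrow> h j \<notin> P" using 2 hN chN p0 p1 T1 by auto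
        ultimately show ?thesis using SSx 2 by blast
      next
        case (3 j)
        have "adj ?H p q" using 3 SSx by (auto simp: star_adj)
        moreover have "adj G (\<psi> p) (\<psi> q)" using 3 hN SSx p0 p2 T1 by auto
        ultimately show ?thesis by blast
      next
        case (4 i j)
        have "\<not> adj ?H p q" using 4 by (auto simp: star_adj)
        moreover have "\<not> adj G (\<psi> p) (\<psi> q)"
        proof (cases "h i \<in> P")
          case True
          hence "adj G (\<psi> p) u \<longleftrightarrow> u = h i" for u using 4 p1 T4 by simp
          moreover have "\<psi> q \<noteq> h i" using 4 p1 True chN[of "h j"] hN[of i] by (cases "h j \<in> P") auto
          ultimately show ?thesis by blast
        next
          case False
          hence "adj G (\<psi> p) u \<longleftrightarrow> u = ce" for u using 4 p1 T2 hN by simp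
          moreover have "\<psi> q \<noteq> ce" using 4 p1 chce hN ceN by (cases "h j \<in> P") auto
          ultimately show ?thesis by blast
        qed
        ultimately show ?thesis by blast
      next
        case (5 i j)
        have hjP: "h j \<in> P" using 5 SSx by blast
        have "adj ?H p q \<longleftrightarrow> i = j" using 5 by (auto simp: star_adj)
        moreover have "adj G (\<psi> p) (\<psi> q) \<longleftrightarrow> i = j"
        proof (cases "h i \<in> P")
          case True
          hence "adj G (\<psi> p) (\<psi> q) \<longleftrightarrow> h j = h i" using 5 p1 p2 T4 by simp
          thus ?thesis using hinj 5 SSx by blast
        next
          case False
          hence "adj G (\<psi> p) (\<psi> q) \<longleftrightarrow> h j = ce" using 5 p1 p2 T2 hN by simp
          moreover have "i \<noteq> j" using False hjP by blast
          ultimately show ?thesis using hN 5 SSx ceN by auto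
        qed
        ultimately show ?thesis by blast
      next
        case (6 i j)
        have "\<not> adj ?H p q" using 6 by (auto simp: star_adj)
        moreover have "\<not> adj G (\<psi> p) (\<psi> q)"
        proof -
          have hiP: "h i \<in> P" and hjP: "h j \<in> P" using 6 SSx by auto
          have "adj G (h i) u \<longleftrightarrow> u = ce \<or> u = ch (h i)" for u using T3[OF hiP] .
          moreover have "h j \<noteq> ce" "h j \<noteq> ch (h i)" using hjP PN' ceN chN[OF hiP] by auto
          ultimately show ?thesis using 6 p2 by simp
        qed
        ultimately show ?thesis by blast
      qed
    qed
    show ?thesis
    proof (cases "fst p \<le> fst q")
      case True thus ?thesis using key that by blast
    next
      case False
      hence "adj ?H q p \<longleftrightarrow> adj G (\<psi> q) (\<psi> p)" using key that by simp
      thus ?thesis using sym adj_sym by blast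
    qed
  qed
  have img: "\<psi> ` verts ?H = V"
  proof
    show "\<psi> ` verts ?H \<subseteq> V"
    proof
      fix v assume "v \<in> \<psi> ` verts ?H"
      then obtain p where p: "p \<in> verts ?H" "v = \<psi> p" by blast
      have "\<psi> p \<in> {ce} \<union> N \<union> ch ` P" using p(1) unfolding vH using p0 p1 p2 hN SSx by auto
      thus "v \<in> V" using cover p(2) N_def by simp
    qed
  next
    show "V \<subseteq> \<psi> ` verts ?H"
    proof
      fix v assume "v \<in> V"
      hence "v = ce \<or> v \<in> N \<or> v \<in> ch ` P" using cover N_def by blast
      moreover have "ce \<in> \<psi> ` verts ?H"
      proof -
        have "(0,0) \<in> verts ?H" using vH by simp
        thus ?thesis using p0 by (metis image_eqI)
      qed
      moreover have "a \<in> \<psi> ` verts ?H" if aN: "a \<in> N" for a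
      proof -
        obtain i where i: "i \<in> {1..x}" "a = h i" using h aN by (auto simp: bij_betw_def)
        show ?thesis
        proof (cases "a \<in> P")
          case True
          hence "(2,i) \<in> verts ?H" using vH SSx i by auto
          moreover have "a = \<psi> (2,i)" using p2 i by simp
          ultimately show ?thesis by blast
        next
          case False
          hence "(1,i) \<in> verts ?H" using vH i by auto
          moreover have "a = \<psi> (1,i)" using p1 i False by simp
          ultimately show ?thesis by blast
        qed
      qed
      moreover have "ch a \<in> \<psi> ` verts ?H" if aP: "a \<in> P" for a
      proof -
        obtain i where i: "i \<in> {1..x}" "a = h i" using h PN'[OF aP] by (auto simp: bij_betw_def)
        have "(1,i) \<in> verts ?H" using vH i by auto
        moreover have "ch a = \<psi> (1,i)" using p1 i aP by simp
        ultimately show ?thesis by blast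
      qed
      ultimately show "v \<in> \<psi> ` verts ?H" by blast
    qed
  qed
  have cls: "(r = (0,0) \<and> \<psi> r = ce) \<or> (\<exists>i\<in>{1..x}. r = (1,i) \<and> h i \<notin> P \<and> \<psi> r = h i)
      \<or> (\<exists>i\<in>{1..x}. r = (1,i) \<and> h i \<in> P \<and> \<psi> r = ch (h i)) \<or> (\<exists>i\<in>{1..x}. r = (2,i) \<and> h i \<in> P \<and> \<psi> r = h i)"
    if "r \<in> verts ?H" for r
    using that unfolding vH using p0 p1 p2 SSx by auto
  have inj: "inj_on \<psi> (verts ?H)"
  proof (rule inj_onI)
    fix p q assume pq: "p \<in> verts ?H" "q \<in> verts ?H" and e: "\<psi> p = \<psi> q"
    have hceN: "i \<in> {1..x} \<Longrightarrow> h i \<noteq> ce" for i using hN ceN by blast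
    have chN': "i \<in> {1..x} \<Longrightarrow> h i \<in> P \<Longrightarrow> ch (h i) \<notin> N" for i using chN by blast
    have chce': "i \<in> {1..x} \<Longrightarrow> h i \<in> P \<Longrightarrow> ch (h i) \<noteq> ce" for i using chce by blast
    consider "p = (0,0)" "\<psi> p = ce" | i where "i \<in> {1..x}" "p = (1,i)" "h i \<notin> P" "\<psi> p = h i"
      | i where "i \<in> {1..x}" "p = (1,i)" "h i \<in> P" "\<psi> p = ch (h i)"
      | i where "i \<in> {1..x}" "p = (2,i)" "h i \<in> P" "\<psi> p = h i"
      using cls[OF pq(1)] by blast
    note cp = this
    consider "q = (0,0)" "\<psi> q = ce" | j where "j \<in> {1..x}" "q = (1,j)" "h j \<notin> P" "\<psi> q = h j"
      | j where "j \<in> {1..x}" "q = (1,j)" "h j \<in> P" "\<psi> q = ch (h j)"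
      | j where "j \<in> {1..x}" "q = (2,j)" "h j \<in> P" "\<psi> q = h j"
      using cls[OF pq(2)] by blast
    note cq = this
    show "p = q"
    proof (cases rule: cp)
      case P1: 1
      show ?thesis
      proof (cases rule: cq)
        case 1 thus ?thesis using P1(1) 1(1) by simp
      next
        case (2 j) thus ?thesis using e[unfolded P1(2) 2(4)] hceN[OF 2(1)] by metis
      next
        case (3 j) thus ?thesis using e[unfolded P1(2) 3(4)] chce'[OF 3(1) 3(3)] by metis
      next
        case (4 j) thus ?thesis using e[unfolded P1(2) 4(4)] hceN[OF 4(1)] by metis
      qed
    next
      case P2: (2 i)
      show ?thesis
      proof (cases rule: cq)
        case 1 thus ?thesis using e[unfolded P2(4) 1(2)] hceN[OF P2(1)] by metis
      next
        case (2 j) thus ?thesis using e[unfolded P2(4) 2(4)] hinj[OF P2(1) 2(1)] P2 2 by auto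
      next
        case (3 j) thus ?thesis using e[unfolded P2(4) 3(4)] chN'[OF 3(1) 3(3)] hN[OF P2(1)] by metis
      next
        case (4 j) thus ?thesis using e[unfolded P2(4) 4(4)] hinj[OF P2(1) 4(1)] P2 4 by auto
      qed
    next
      case P3: (3 i)
      show ?thesis
      proof (cases rule: cq)
        case 1 thus ?thesis using e[unfolded P3(4) 1(2)] chce'[OF P3(1) P3(3)] by metis
      next
        case (2 j) thus ?thesis using e[unfolded P3(4) 2(4)] chN'[OF P3(1) P3(3)] hN[OF 2(1)] by metis
      next
        case (3 j) thus ?thesis using e[unfolded P3(4) 3(4)] chinj[OF P3(3) 3(3)] hinj[OF P3(1) 3(1)] P3 3 by auto
      next
        case (4 j) thus ?thesis using e[unfolded P3(4) 4(4)] chN'[OF P3(1) P3(3)] hN[OF 4(1)] by metis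
      qed
    next
      case P4: (4 i)
      show ?thesis
      proof (cases rule: cq)
        case 1 thus ?thesis using e[unfolded P4(4) 1(2)] hceN[OF P4(1)] by metis
      next
        case (2 j) thus ?thesis using e[unfolded P4(4) 2(4)] hinj[OF P4(1) 2(1)] P4 2 by auto
      next
        case (3 j) thus ?thesis using e[unfolded P4(4) 3(4)] chN'[OF 3(1) 3(3)] hN[OF P4(1)] by metis
      next
        case (4 j) thus ?thesis using e[unfolded P4(4) 4(4)] hinj[OF P4(1) 4(1)] P4 4 by auto
      qed
    qed
  qed
  have bb: "bij_betw \<psi> (verts ?H) V" unfolding bij_betw_def using inj img by blast
  have "graph_iso G ?H" by (rule iso_inv[OF bb R])
  moreover have "card SS \<le> x - 1"
  proof -
    have sub: "h ` SS \<subseteq> N - {z}" using SSx PN N_def by auto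
    have ij: "inj_on h SS" unfolding inj_on_def using hinj SSx by blast
    have "card SS \<le> card (N - {z})" using card_inj_on_le[OF ij sub] finN by simp
    moreover have "card (N - {z}) = x - 1" using zN N_def x_def finN by simp
    ultimately show ?thesis by simp
  qed
  moreover have "x \<ge> 3" using c3 x_def N_def by simp
  moreover have "SS \<subseteq> {1..x}" using SSx by blast
  ultimately show ?thesis by blast
qed

lemma pg_verts: "verts (path_graph n) = {0..<n}" by (simp add: path_graph_def verts_def)
lemma pg_adj: "adj (path_graph n) i j \<longleftrightarrow> i < n \<and> j < n \<and> (j = Suc i \<or> i = Suc j)"
  by (simp add: path_graph_def adj_def)

lemma p2: assumes V2: "V = {s,p}" and sp: "adj G s p" shows "graph_iso G (path_graph 2)"
proof -
  define \<psi> where "\<psi> i = (if i = (0::nat) then s else p)" for i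
  have ne: "s \<noteq> p" using sp adj_irr by blast
  have ps: "adj G p s" using adj_sym sp by blast
  have v: "verts (path_graph 2) = {0,1}" by (auto simp: pg_verts)
  have "bij_betw \<psi> (verts (path_graph 2)) V"
    unfolding v V2 bij_betw_def inj_on_def \<psi>_def using ne by auto
  moreover have "adj (path_graph 2) i j \<longleftrightarrow> adj G (\<psi> i) (\<psi> j)" if "i \<in> verts (path_graph 2)" "j \<in> verts (path_graph 2)" for i j
    using that unfolding v pg_adj \<psi>_def using sp ps adj_irr by auto
  ultimately show ?thesis using iso_inv by blast
qed

lemma p3: assumes V3: "V = {s,p,q}" and sp: "adj G s p" and pq: "adj G p q" and sq: "\<not> adj G s q" "s \<noteq> q"
  shows "graph_iso G (path_graph 3)"
proof -
  define \<psi> where "\<psi> i = (if i = (0::nat) then s else if i = 1 then p else q)" for i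
  have ne: "s \<noteq> p" "p \<noteq> q" using sp pq adj_irr by blast+
  have ps: "adj G p s" "adj G q p" "\<not> adj G q s" using adj_sym sp pq sq by blast+
  have v: "verts (path_graph 3) = {0,1,2}" by (auto simp: pg_verts)
  have "bij_betw \<psi> (verts (path_graph 3)) V"
    unfolding v V3 bij_betw_def inj_on_def \<psi>_def using ne sq by auto
  moreover have "adj (path_graph 3) i j \<longleftrightarrow> adj G (\<psi> i) (\<psi> j)" if "i \<in> verts (path_graph 3)" "j \<in> verts (path_graph 3)" for i j
    using that unfolding v pg_adj \<psi>_def using sp ps pq sq adj_irr by auto
  ultimately show ?thesis using iso_inv by blast
qed

lemma iso_cc: assumes b: "bij_betw \<phi> V (verts H)" and a: "\<forall>x\<in>V. \<forall>y\<in>V. adj G x y \<longleftrightarrow> adj H (\<phi> x) (\<phi> y)"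
  and uv: "u \<in> V" "v \<in> V" shows "cc G u v = cc H (\<phi> u) (\<phi> v)"
proof -
  have "u = v \<longleftrightarrow> \<phi> u = \<phi> v" using b uv unfolding bij_betw_def inj_on_def by blast
  thus ?thesis unfolding cc_def using a uv by simp
qed

lemma ARs_iso: assumes b: "bij_betw \<phi> V (verts H)" and a: "\<forall>x\<in>V. \<forall>y\<in>V. adj G x y \<longleftrightarrow> adj H (\<phi> x) (\<phi> y)"
  and Q: "ARs H Qc"
  shows "ARs G {v\<in>V. \<phi> v \<in> Qc}" "card {v\<in>V. \<phi> v \<in> Qc} = card Qc"
proof -
  have QH: "Qc \<subseteq> verts H" using Q by (simp add: ARs_def)
  have bb: "bij_betw \<phi> {v\<in>V. \<phi> v \<in> Qc} Qc"
    using b QH unfolding bij_betw_def inj_on_def by auto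
  thus "card {v\<in>V. \<phi> v \<in> Qc} = card Qc" by (rule bij_betw_same_card)
  show "ARs G {v\<in>V. \<phi> v \<in> Qc}"
    unfolding ARs_def
  proof (intro conjI ballI impI)
    show "{v \<in> V. \<phi> v \<in> Qc} \<subseteq> V" by blast
    fix u w assume uw: "u \<in> V" "w \<in> V" "u \<noteq> w"
    have "\<phi> u \<noteq> \<phi> w" "\<phi> u \<in> verts H" "\<phi> w \<in> verts H"
      using b uw unfolding bij_betw_def inj_on_def by auto
    then obtain r where r: "r \<in> Qc" "cc H (\<phi> u) r \<noteq> cc H (\<phi> w) r" using Q unfolding ARs_def by blast
    have "r \<in> \<phi> ` V" using b r QH unfolding bij_betw_def by auto
    then obtain z where z: "z \<in> V" "\<phi> z = r" by blast
    have "cc G u z \<noteq> cc G w z" using iso_cc[OF b a] uw z r by simp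
    thus "\<exists>z\<in>{v \<in> V. \<phi> v \<in> Qc}. cc G u z \<noteq> cc G w z" using z r by blast
  qed
qed

lemma res_nonempty: assumes "card V \<ge> 2" "resolving_set G R" shows "card R \<ge> 1"
proof -
  have "R \<subseteq> V" using assms(2) by (simp add: resolving_set_def)
  hence finR: "finite R" using finV finite_subset by blast
  obtain u w where "u \<in> V" "w \<in> V" "u \<noteq> w" using two_elems[OF assms(1)] by blast
  then obtain z where "z \<in> R" using assms(2) unfolding resolving_set_def by blast
  thus ?thesis using finR by (metis One_nat_def Suc_leI card_gt_0_iff empty_iff)
qed

lemma path_back: assumes iso: "graph_iso G (path_graph n)" and n: "n = 2 \<or> n = 3"
  shows "metric_dim G = broadcast_dim G"
proof -
  obtain \<phi> where b: "bij_betw \<phi> V (verts (path_graph n))"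
    and a: "\<forall>x\<in>V. \<forall>y\<in>V. adj G x y \<longleftrightarrow> adj (path_graph n) (\<phi> x) (\<phi> y)"
    using iso unfolding graph_iso_def by blast
  have c0: "cc (path_graph n) p 0 = p" if "p \<in> verts (path_graph n)" for p
    using that n unfolding cc_def pg_verts pg_adj by auto
  have Q: "ARs (path_graph n) {0}"
    unfolding ARs_def using c0 n by (auto simp: pg_verts)
  have cV: "card V \<ge> 2" using bij_betw_same_card[OF b] n by (auto simp: pg_verts)
  show ?thesis
    using eq_from_AR[OF ARs_iso(1)[OF b a Q]] ARs_iso(2)[OF b a Q] res_nonempty[OF cV] by simp
qed

lemma star_lb: assumes b: "bij_betw \<phi> V (verts (subdivided_star x SS))"
  and a: "\<forall>u\<in>V. \<forall>v\<in>V. adj G u v \<longleftrightarrow> adj (subdivided_star x SS) (\<phi> u) (\<phi> v)"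
  and R: "resolving_set G R" shows "card R \<ge> x - 1"
proof (rule ccontr)
  assume "\<not> card R \<ge> x - 1"
  hence cR: "card R + 2 \<le> x" by simp
  let ?H = "subdivided_star x SS"
  define \<psi> where "\<psi> = inv_into V \<phi>"
  have RV: "R \<subseteq> V" using R by (simp add: resolving_set_def)
  hence finR: "finite R" using finV finite_subset by blast
  have psV: "p \<in> verts ?H \<Longrightarrow> \<psi> p \<in> V" for p
    using b unfolding \<psi>_def bij_betw_def by (auto intro: inv_into_into)
  have php: "p \<in> verts ?H \<Longrightarrow> \<phi> (\<psi> p) = p" for p
    using b unfolding \<psi>_def bij_betw_def by (auto simp: f_inv_into_f)
  have psph: "v \<in> V \<Longrightarrow> \<psi> (\<phi> v) = v" for v
    using b unfolding \<psi>_def bij_betw_def by (auto simp: inv_into_f_f)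
  have adjpsi: "p \<in> verts ?H \<Longrightarrow> q \<in> verts ?H \<Longrightarrow> adj G (\<psi> p) (\<psi> q) \<longleftrightarrow> adj ?H p q" for p q
    using a psV php by metis
  have c0: "(0,0) \<in> verts ?H" by (simp add: star_verts)
  define ce where "ce = \<psi> (0,0)"
  have ceV: "ce \<in> V" using psV c0 ce_def by simp
  have gV: "i \<in> {1..x} \<Longrightarrow> gtop SS i \<in> verts ?H" for i
    unfolding star_verts gtop_def by auto
  define at where "at i = \<psi> (gtop SS i)" for i
  have adjat: "i \<in> {1..x} \<Longrightarrow> adj G ce (at i)" for i
    using adjpsi[OF c0 gV] unfolding ce_def at_def star_adj gtop_def by auto
  have at_inj: "i \<in> {1..x} \<Longrightarrow> j \<in> {1..x} \<Longrightarrow> at i = at j \<Longrightarrow> i = j" for i j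
    using php gV unfolding at_def gtop_def by (metis prod.inject)
  have M: "z \<in> br ce (at (snd (\<phi> z)))" if zV: "z \<in> V" "\<phi> z \<noteq> (0,0)" for z
  proof -
    have pz: "\<phi> z \<in> verts ?H" using b zV unfolding bij_betw_def by auto
    define l where "l = snd (\<phi> z)"
    note nc = star_nc[OF pz zV(2)]
    have l1: "l \<in> {1..x}" using nc l_def by simp
    show ?thesis
    proof (cases "\<phi> z = gtop SS l")
      case True
      hence "z = at l" using psph zV unfolding at_def by metis
      thus ?thesis using br_a[OF adjat[OF l1]] l_def by simp
    next
      case False
      hence zl: "\<phi> z = (1,l)" and lS: "l \<in> SS" using nc l_def unfolding gtop_def by (auto split: if_splits)
      have "adj ?H (\<phi> z) (gtop SS l)" using zl lS l1 unfolding star_adj gtop_def by auto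
      hence za: "adj G z (at l)" using adjpsi[OF pz gV[OF l1]] psph zV unfolding at_def by metis
      have "\<not> adj ?H (0,0) (\<phi> z)" using zl lS unfolding star_adj by auto
      hence nz: "\<not> adj G ce z" using adjpsi[OF c0 pz] psph zV unfolding ce_def by metis
      have "z \<noteq> ce" using php c0 zV(2) unfolding ce_def by metis
      hence "d ce z \<noteq> 0" "d ce z \<noteq> 1" using d_eq0 d_one ceV zV nz by blast+
      moreover have "d (at l) z = 1" using d_adj[OF adj_sym[OF za]] .
      ultimately show ?thesis using zV l_def by (simp add: br_def)
    qed
  qed
  have N: "z \<notin> br ce (at i)" if zV: "z \<in> V" "\<phi> z = (0,0) \<or> snd (\<phi> z) \<noteq> i" "i \<in> {1..x}" for z i
  proof (cases "\<phi> z = (0,0)")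
    case True
    hence "z = ce" using psph zV unfolding ce_def by metis
    thus ?thesis using br_c ceV by simp
  next
    case False
    have pz: "\<phi> z \<in> verts ?H" using b zV unfolding bij_betw_def by auto
    have l1: "snd (\<phi> z) \<in> {1..x}" using star_nc[OF pz False] by simp
    have ne: "at (snd (\<phi> z)) \<noteq> at i" using at_inj l1 zV False by blast
    show ?thesis using br_disj[OF adjat[OF l1] adjat[OF zV(3)] ne] M[OF zV(1) False] by blast
  qed
  define I where "I = (\<lambda>z. snd (\<phi> z)) ` {z\<in>R. \<phi> z \<noteq> (0,0)}"
  have finR': "finite {z\<in>R. \<phi> z \<noteq> (0,0)}" using finR by simp
  have cI: "card I \<le> card R"
  proof -
    have "card I \<le> card {z\<in>R. \<phi> z \<noteq> (0,0)}" unfolding I_def using card_image_le[OF finR'] .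
    also have "\<dots> \<le> card R" using finR by (intro card_mono) auto
    finally show ?thesis .
  qed
  have finI: "finite I" unfolding I_def using finR' by simp
  have "card ({1..x} - I) \<ge> 2"
  proof -
    have "card {1..x} \<le> card (({1..x} - I) \<union> I)" by (intro card_mono) (use finI in auto)
    also have "\<dots> \<le> card ({1..x} - I) + card I" by (rule card_Un_le)
    finally have "card {1..x} \<le> card ({1..x} - I) + card I" .
    thus ?thesis using cI cR by simp
  qed
  then obtain i i' where ii: "i \<in> {1..x} - I" "i' \<in> {1..x} - I" "i \<noteq> i'"
    using two_elems by blast
  have outs: "\<phi> z = (0,0) \<or> snd (\<phi> z) \<noteq> j" if "z \<in> R" "j \<notin> I" for z j
    using that unfolding I_def by auto
  have ai: "at i \<in> V" "at i' \<in> V" using psV gV ii unfolding at_def by auto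
  have "at i \<noteq> at i'" using at_inj ii by blast
  then obtain z where z: "z \<in> R" "d (at i) z \<noteq> d (at i') z"
    using R ai unfolding resolving_set_def by blast
  have zV: "z \<in> V" using RV z by blast
  have "d (at i) z = Suc (d ce z)" using nbr_dist[OF adjat zV N[OF zV outs]] z ii by auto
  moreover have "d (at i') z = Suc (d ce z)" using nbr_dist[OF adjat zV N[OF zV outs]] z ii by auto
  ultimately show False using z by simp
qed

lemma star_back: assumes iso: "graph_iso G (subdivided_star x SS)" and x3: "x \<ge> 3"
  and SS: "SS \<subseteq> {1..x}" "card SS \<le> x - 1"
  shows "metric_dim G = broadcast_dim G"
proof -
  obtain \<phi> where b: "bij_betw \<phi> V (verts (subdivided_star x SS))"
    and a: "\<forall>u\<in>V. \<forall>v\<in>V. adj G u v \<longleftrightarrow> adj (subdivided_star x SS) (\<phi> u) (\<phi> v)"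
    using iso unfolding graph_iso_def by blast
  have "SS \<noteq> {1..x}" using SS x3 by auto
  then obtain i0 where i0: "i0 \<in> {1..x}" "i0 \<notin> SS" using SS by blast
  note Q = star_AR[OF x3 i0]
  show ?thesis
    using eq_from_AR[OF ARs_iso(1)[OF b a Q(1)]] ARs_iso(2)[OF b a Q(1)] Q(2) star_lb[OF b a] by simp
qed

end

locale mn = tr + fixes S assumes AR: "ARs G S" and minS: "\<And>R. resolving_set G R \<Longrightarrow> card S \<le> card R"
  and two: "card V \<ge> 2"
begin

lemma SV: "S \<subseteq> V" using AR by (simp add: ARs_def)
lemma finS: "finite S" using SV finV finite_subset by blast

lemma trace_eq: assumes "u \<in> V" "w \<in> V" "u \<notin> S" "w \<notin> S" "\<And>z. z \<in> S \<Longrightarrow> adj G u z \<longleftrightarrow> adj G w z"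
  shows "u = w"
proof (rule ccontr)
  assume "u \<noteq> w"
  then obtain z where z: "z \<in> S" "cc G u z \<noteq> cc G w z" using AR assms unfolding ARs_def by blast
  have "u \<noteq> z" "w \<noteq> z" using z assms by auto
  thus False using z assms(5)[OF z(1)] by (simp add: cc_def)
qed

definition "Zs = {v\<in>V. v \<notin> S \<and> (\<forall>z\<in>S. \<not> adj G v z)}"
definition "Ws t = {v\<in>V. v \<notin> S \<and> (\<forall>z\<in>S. adj G v z \<longleftrightarrow> z = t)}"

lemma Z_uniq: "u \<in> Zs \<Longrightarrow> w \<in> Zs \<Longrightarrow> u = w"
  by (rule trace_eq) (auto simp: Zs_def)

lemma W_uniq: "u \<in> Ws t \<Longrightarrow> w \<in> Ws t \<Longrightarrow> u = w"
  by (rule trace_eq) (auto simp: Ws_def)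

lemma k1: assumes "card S = 1" shows "card V \<le> 3"
proof -
  obtain s where s: "S = {s}" using assms card_1_singletonE by blast
  have "inj_on (\<lambda>v. cc G v s) V"
  proof (rule inj_onI)
    fix u w assume "u \<in> V" "w \<in> V" "cc G u s = cc G w s"
    thus "u = w" using AR s unfolding ARs_def by blast
  qed
  moreover have "(\<lambda>v. cc G v s) ` V \<subseteq> {0,1,2}" by (auto simp: cc_def)
  ultimately have "card V \<le> card {0::nat,1,2}" using card_inj_on_le by (metis finite.emptyI finite.insertI)
  thus ?thesis by simp
qed

lemma nbr_top: assumes "adj G c a" "z \<in> S" "adj G a z" "br c a \<inter> S = {}" shows "z = c"
  using br_nbr[OF assms(1) br_a[OF assms(1)] assms(3)] assms(2,4) by blast

lemma empty2: assumes "adj G c a" "adj G c b" "a \<noteq> b" "br c a \<inter> S = {}" "br c b \<inter> S = {}"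
  shows False
proof -
  have aV: "a \<in> V" and bV: "b \<in> V" using adjV assms by auto
  have "a \<notin> S" "b \<notin> S" using br_a assms by blast+
  moreover have "adj G a z \<longleftrightarrow> adj G b z" if "z \<in> S" for z
    using nbr_top[OF assms(1) that _ assms(4)] nbr_top[OF assms(2) that _ assms(5)] assms(1,2) adj_sym by blast
  ultimately have "a = b" using trace_eq aV bV by blast
  thus False using assms(3) by simp
qed

definition "wit t c a b \<longleftrightarrow> adj G c a \<and> adj G c b \<and> a \<noteq> b \<and> br c a \<inter> S = {t} \<and> br c b \<inter> S = {}"

lemma witness: assumes "card S \<ge> 2" "t \<in> S" shows "\<exists>c a b. wit t c a b"
proof -
  let ?R = "S - {t}"
  have "card ?R < card S" using assms finS by (simp add: card_Diff1_less)
  hence nr: "\<not> resolving_set G ?R" using minS by (meson not_le)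
  have "card ?R = card S - 1" using assms finS by simp
  hence "card ?R \<noteq> 0" using assms by simp
  hence "?R \<noteq> {}" by (metis card.empty)
  moreover have "?R \<subseteq> V" using SV by blast
  ultimately have "\<exists>c a b. adj G c a \<and> adj G c b \<and> a \<noteq> b \<and> br c a \<inter> ?R = {} \<and> br c b \<inter> ?R = {}"
    using crit[of ?R] nr by blast
  then obtain c a b where cab: "adj G c a" "adj G c b" "a \<noteq> b" "br c a \<inter> ?R = {}" "br c b \<inter> ?R = {}"
    by blast
  have "\<not> (br c a \<inter> S = {} \<and> br c b \<inter> S = {})" using empty2 cab by blast
  moreover have "\<not> (t \<in> br c a \<and> t \<in> br c b)" using br_disj cab by blast
  ultimately have "(br c a \<inter> S = {t} \<and> br c b \<inter> S = {}) \<or> (br c b \<inter> S = {t} \<and> br c a \<inter> S = {})"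
    using cab assms(2) by blast
  thus ?thesis
  proof
    assume "br c a \<inter> S = {t} \<and> br c b \<inter> S = {}"
    hence "wit t c a b" using cab unfolding wit_def by blast
    thus ?thesis by blast
  next
    assume "br c b \<inter> S = {t} \<and> br c a \<inter> S = {}"
    hence "wit t c b a" using cab unfolding wit_def by blast
    thus ?thesis by blast
  qed
qed

lemma deg3: assumes "card S \<ge> 2"
  shows "\<exists>v n1 n2 n3. adj G v n1 \<and> adj G v n2 \<and> adj G v n3 \<and> n1 \<noteq> n2 \<and> n1 \<noteq> n3 \<and> n2 \<noteq> n3"
proof (rule ccontr)
  assume H: "\<not> ?thesis"
  have "V \<noteq> {}" using two by auto
  then obtain l where l: "l \<in> V" "\<forall>u1 u2. adj G l u1 \<longrightarrow> adj G l u2 \<longrightarrow> u1 = u2" using leaf_ex by blast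
  have "resolving_set G {l}"
  proof (rule crit)
    show "{l} \<subseteq> V" "{l} \<noteq> {}" using l by auto
    fix c a b assume cab: "adj G c a" "adj G c b" "a \<noteq> b"
    show "br c a \<inter> {l} \<noteq> {} \<or> br c b \<inter> {l} \<noteq> {}"
    proof (cases "c = l")
      case True thus ?thesis using l cab by blast
    next
      case False
      have cV: "c \<in> V" using adjV cab by auto
      obtain a3 where a3: "adj G c a3" "l \<in> br c a3" using br_cover[OF cV l(1)] False by metis
      show ?thesis
      proof (cases "a3 = a \<or> a3 = b")
        case True thus ?thesis using a3 by auto
      next
        case False thus ?thesis using H cab a3 by blast
      qed
    qed
  qed
  hence "card S \<le> 1" using minS by fastforce
  thus False using assms by simp
qed

lemma wit_D: assumes "wit t c a b"
  shows "adj G c a" "adj G c b" "a \<noteq> b" "t \<in> S" "t \<in> br c a" "br c a \<inter> S = {t}" "br c b \<inter> S = {}"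
  using assms unfolding wit_def by auto

lemma in_br_S: "br c a \<inter> S = {t} \<Longrightarrow> y \<in> br c a \<Longrightarrow> y \<in> S \<Longrightarrow> y = t" by blast

lemma bad: assumes two2: "card S \<ge> 2" and w: "wit t c a b" and cS: "c \<in> S"
  shows "\<exists>c' a' b'. wit t c' a' b' \<and> c' \<notin> S"
proof -
  note wd = wit_D[OF w]
  have cV: "c \<in> V" and aV: "a \<in> V" and bV: "b \<in> V" using adjV wd by auto
  obtain c2 a2 b2 where w2: "wit c c2 a2 b2" using witness[OF two2 cS] by blast
  note wd2 = wit_D[OF w2]
  have c2V: "c2 \<in> V" using adjV wd2 by auto
  have cc2: "c2 \<noteq> c" using br_c[OF c2V] wd2 by auto
  obtain a3 where a3: "adj G c a3" "c2 \<in> br c a3" using br_cover[OF cV c2V cc2] by metis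
  have a3a: "a3 = a"
  proof (rule ccontr)
    assume "a3 \<noteq> a"
    hence "t \<notin> br c a3" using br_disj[OF wd(1) a3(1)] wd by blast
    hence "t \<in> br c2 a2" using far[OF a3(1) wd2(1) wd2(5) a3(2)] wd SV by blast
    hence "t = c" using wd2(6) wd(4) by blast
    thus False using br_c[OF cV] wd(5) by simp
  qed
  have FAR: "y \<in> br c2 a2" if "y \<in> V" "y \<notin> br c a" for y
    using far[OF wd(1) wd2(1) wd2(5)] a3 a3a that by blast
  have FS: "y = c" if "y \<in> S" "y \<notin> br c a" for y
    using FAR[of y] that SV wd2(6) by blast
  have nbc: "a4 = a \<or> a4 = b" if "adj G c a4" for a4
  proof (rule ccontr)
    assume "\<not> (a4 = a \<or> a4 = b)"
    hence ne: "a4 \<noteq> a" "a4 \<noteq> b" by auto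
    have "br c a4 \<inter> S = {}"
    proof (rule ccontr)
      assume "br c a4 \<inter> S \<noteq> {}"
      then obtain y where y: "y \<in> br c a4" "y \<in> S" by blast
      have "y \<notin> br c a" using br_disj[OF that wd(1) ne(1)] y by blast
      hence "y = c" using FS y by blast
      thus False using br_c[OF cV] y by simp
    qed
    thus False using empty2[OF that wd(2) ne(2)] wd(7) by blast
  qed
  have Vd: "y = c \<or> y \<in> br c a \<or> y \<in> br c b" if yV: "y \<in> V" for y
  proof (cases "y = c")
    case False
    then obtain a4 where "adj G c a4" "y \<in> br c a4" using br_cover[OF cV yV] by metis
    thus ?thesis using nbc by blast
  qed simp
  have Seq: "S = {c, t}"
  proof
    show "S \<subseteq> {c, t}"
    proof
      fix y assume y: "y \<in> S"
      hence "y \<in> V" using SV by blast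
      thus "y \<in> {c,t}" using Vd[of y] y wd(6,7) by blast
    qed
    show "{c,t} \<subseteq> S" using cS wd(4) by blast
  qed
  have bS: "b \<notin> S" using wd(7) br_a[OF wd(2)] by blast
  have aS: "a \<noteq> t \<Longrightarrow> a \<notin> S" using wd(6) br_a[OF wd(1)] by blast
  have trb: "adj G b z \<longleftrightarrow> z = c" if "z \<in> S" for z
    using nbr_top[OF wd(2) that _ wd(7)] wd(2) adj_sym by blast
  have at: "adj G a t" if "a \<noteq> t"
  proof (rule ccontr)
    assume nat: "\<not> adj G a t"
    have "adj G a z \<longleftrightarrow> z = c" if "z \<in> S" for z
    proof
      assume "adj G a z"
      hence "z \<in> br c a \<or> z = c" using br_nbr[OF wd(1) br_a[OF wd(1)]] by blast
      thus "z = c" using in_br_S[OF wd(6)] that nat \<open>adj G a z\<close> by blast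
    qed (use wd(1) adj_sym in blast)
    hence "a = b" using trace_eq[OF aV bV aS[OF \<open>a \<noteq> t\<close>] bS] trb by blast
    thus False using wd(3) by simp
  qed
  have inA: "y = t \<or> y = a \<or> y \<in> Zs \<or> y \<in> Ws t" if "y \<in> br c a" for y
  proof -
    consider "y = t" | "y = a" | "y \<noteq> t" "y \<noteq> a" by blast
    thus ?thesis
    proof cases
      case 3
      have yS: "y \<notin> S" using in_br_S[OF wd(6) that] 3 by blast
      have "z = t" if "z \<in> S" "adj G y z" for z
        using br_nbr[OF wd(1) \<open>y \<in> br c a\<close> that(2)] 3 in_br_S[OF wd(6)] that(1) by blast
      hence "y \<in> Zs \<or> y \<in> Ws t" using yS br_V[OF that] wd(4) unfolding Zs_def Ws_def by blast
      thus ?thesis by blast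
    qed auto
  qed
  have inB: "y \<in> Zs" if "y \<in> br c b" "y \<noteq> b" for y
  proof -
    have "y \<notin> S" using wd(7) that by blast
    moreover have "\<not> adj G y z" if "z \<in> S" for z
      using br_nbr[OF wd(2) \<open>y \<in> br c b\<close>] \<open>y \<noteq> b\<close> wd(7) that by blast
    ultimately show ?thesis using br_V that unfolding Zs_def by blast
  qed
  have Wadj: "adj G y t" if "y \<in> Ws t" for y using that wd(4) unfolding Ws_def by blast
  have Znadj: "\<not> adj G y z" if "y \<in> Zs" "z \<in> S" for y z using that unfolding Zs_def by blast
  have ZS: "y \<notin> S" if "y \<in> Zs" for y using that unfolding Zs_def by blast
  have WS: "y \<notin> S" if "y \<in> Ws t" for y using that unfolding Ws_def by blast
  obtain v n1 n2 n3 where v: "adj G v n1" "adj G v n2" "adj G v n3" "n1 \<noteq> n2" "n1 \<noteq> n3" "n2 \<noteq> n3"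
    using deg3[OF two2] by blast
  have vV: "v \<in> V" using adjV v by auto
  have nV: "n1 \<in> V" "n2 \<in> V" "n3 \<in> V" using adjV v by auto
  consider "v = c" | "v \<in> br c a" | "v \<in> br c b" using Vd[OF vV] by blast
  thus ?thesis
  proof cases
    case 1
    have P: "n = a \<or> n \<in> {b}" if vn: "adj G v n" for n using nbc vn 1 by blast
    have False using pig1[OF P[OF v(1)] P[OF v(2)] P[OF v(3)] v(4-6)] by blast
    thus ?thesis ..
  next
    case 3
    define x0 where "x0 = (if v = b then c else b)"
    have P: "n = x0 \<or> n \<in> Zs" if vn: "adj G v n" for n
    proof -
      have "n \<in> br c b \<or> (v = b \<and> n = c)" using br_nbr[OF wd(2) 3 vn] .
      thus ?thesis using inB x0_def vn adj_irr by (cases "v = b") auto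
    qed
    have False using pig1[OF P[OF v(1)] P[OF v(2)] P[OF v(3)] v(4-6)] Z_uniq by blast
    thus ?thesis ..
  next
    case 2
    have nA: "n \<in> br c a \<or> (v = a \<and> n = c)" if vn: "adj G v n" for n using br_nbr[OF wd(1) 2 vn] .
    consider "v = t" | "v \<noteq> t" "v = a" | "v \<noteq> t" "v \<noteq> a" "v \<in> Zs" | "v \<noteq> t" "v \<noteq> a" "v \<in> Ws t"
      using inA[OF 2] by blast
    thus ?thesis
    proof cases
      case 1
      define x0 where "x0 = (if t = a then c else a)"
      have P: "n = x0 \<or> n \<in> Ws t" if vn: "adj G v n" for n
      proof -
        have nt: "n \<noteq> t" using vn 1 adj_irr by blast
        have nZ: "n \<notin> Zs"
        proof
          assume "n \<in> Zs"
          moreover have "adj G n t" using vn 1 adj_sym by simp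
          ultimately show False using Znadj wd(4) by blast
        qed
        consider "n \<in> br c a" | "v = a" "n = c" using nA[OF vn] by blast
        thus ?thesis
        proof cases
          case 1
          hence "n = t \<or> n = a \<or> n \<in> Zs \<or> n \<in> Ws t" using inA by simp
          hence "n = a \<or> n \<in> Ws t" using nt nZ by simp
          moreover have "n = a \<Longrightarrow> t \<noteq> a" using vn \<open>v = t\<close> adj_irr by auto
          ultimately show ?thesis unfolding x0_def by auto
        next
          case 2 thus ?thesis using \<open>v = t\<close> x0_def by simp
        qed
      qed
      have False using pig1[OF P[OF v(1)] P[OF v(2)] P[OF v(3)] v(4-6)] W_uniq by blast
      thus ?thesis ..
    next
      case 3
      have P: "n = a \<or> n \<in> Ws t" if vn: "adj G v n" for n
      proof -
        have nb: "n \<in> br c a" using nA[OF vn] 3 by blast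
        have "n \<noteq> t" using Znadj[OF 3(3) wd(4)] vn by blast
        moreover have "n \<notin> Zs"
        proof
          assume "n \<in> Zs" hence "n = v" using Z_uniq[OF 3(3)] by simp
          thus False using vn adj_irr by simp
        qed
        ultimately show ?thesis using inA[OF nb] by simp
      qed
      have False using pig1[OF P[OF v(1)] P[OF v(2)] P[OF v(3)] v(4-6)] W_uniq by blast
      thus ?thesis ..
    next
      case 4
      have P: "n = a \<or> n = t \<or> n \<in> Zs" if vn: "adj G v n" for n
      proof -
        have nb: "n \<in> br c a" using nA[OF vn] 4 by blast
        have "n \<notin> Ws t"
        proof
          assume "n \<in> Ws t" hence "n = v" using W_uniq[OF 4(3)] by simp
          thus False using vn adj_irr by simp
        qed
        thus ?thesis using inA[OF nb] by auto
      qed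
      have pp: "(a = n1 \<or> a = n2 \<or> a = n3) \<and> (t = n1 \<or> t = n2 \<or> t = n3) \<and> a \<noteq> t"
        using pig2[OF P[OF v(1)] P[OF v(2)] P[OF v(3)] v(4-6)] Z_uniq by blast
      have va: "adj G v a" and vt: "adj G v t" using pp v(1-3) by auto
      have "adj G t v" using Wadj[OF 4(3)] adj_sym by blast
      hence False using tri[OF va at[OF conjunct2[OF conjunct2[OF pp]]]] 4 by blast
      thus ?thesis ..
    next
      case 2
      have at': "adj G a t" using at 2 by simp
      have P: "n = c \<or> n = t \<or> n \<in> Zs" if vn: "adj G v n" for n
      proof -
        consider "n \<in> br c a" | "n = c" using nA[OF vn] by blast
        thus ?thesis
        proof cases
          case 1
          have "n \<noteq> a" using vn 2 adj_irr by blast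
          moreover have "n \<notin> Ws t"
          proof
            assume "n \<in> Ws t"
            hence nt: "adj G n t" using Wadj by blast
            have an: "adj G a n" using vn 2 by simp
            have "t \<noteq> a" using 2 by simp
            thus False using tri[OF an nt adj_sym[OF at']] by blast
          qed
          ultimately show ?thesis using inA[OF 1] by auto
        qed simp
      qed
      have "n1 \<in> Zs \<or> n2 \<in> Zs \<or> n3 \<in> Zs" using pig3[OF P[OF v(1)] P[OF v(2)] P[OF v(3)] v(4-6)] .
      then obtain z0 where z0: "z0 \<in> Zs" "adj G a z0" using v(1-3) 2 by blast
      have z0S: "z0 \<notin> S" using ZS z0 by blast
      have tz: "t \<noteq> z0" using z0S wd(4) by blast
      have act: "c \<noteq> t" using wd(5) br_c[OF cV] by blast
      have ac: "adj G a c" using wd(1) adj_sym by blast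
      have "br a t \<inter> S = {t}"
      proof -
        have "t \<in> br a t" using br_a[OF at'] .
        moreover have "c \<notin> br a t" using br_disj[OF ac at' act] br_a[OF ac] by blast
        ultimately show ?thesis using Seq by blast
      qed
      moreover have "br a z0 \<inter> S = {}"
      proof -
        have "c \<noteq> z0" using z0S cS by blast
        hence "c \<notin> br a z0" using br_disj[OF ac z0(2)] br_a[OF ac] by blast
        moreover have "t \<notin> br a z0" using br_disj[OF at' z0(2) tz] br_a[OF at'] by blast
        ultimately show ?thesis using Seq by blast
      qed
      ultimately have "wit t a t z0" unfolding wit_def using at' z0 tz by blast
      moreover have "a \<notin> S" using aS 2 by blast
      ultimately show ?thesis by blast
    qed
  qed
qed

lemma good: assumes "card S \<ge> 2" "t \<in> S" shows "\<exists>c a b. wit t c a b \<and> c \<notin> S"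
proof -
  obtain c a b where w: "wit t c a b" using witness[OF assms] by blast
  show ?thesis
  proof (cases "c \<in> S")
    case True thus ?thesis using bad[OF assms(1) w] by blast
  next
    case False thus ?thesis using w by blast
  qed
qed

lemma emptyZ: assumes "adj G c b" "br c b \<inter> S = {}" "y \<in> br c b" "y \<noteq> b" shows "y \<in> Zs"
proof -
  have "y \<notin> S" using assms by blast
  moreover have "\<not> adj G y z" if "z \<in> S" for z
    using br_nbr[OF assms(1) assms(3)] assms(2,4) that by blast
  ultimately show ?thesis using br_V assms unfolding Zs_def by blast
qed

lemma goodZ: assumes "wit t c a b" "c \<notin> S" shows "b \<in> Zs" "br c b = {b}"
proof -
  note wd = wit_D[OF assms(1)]
  have bb: "b \<in> br c b" using br_a[OF wd(2)] .
  have "b \<notin> S" using wd(7) bb by blast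
  moreover have "\<not> adj G b z" if "z \<in> S" for z
    using nbr_top[OF wd(2) that _ wd(7)] assms(2) that by blast
  moreover have "b \<in> V" using adjV wd by auto
  ultimately show bZ: "b \<in> Zs" unfolding Zs_def by blast
  show "br c b = {b}"
  proof
    show "br c b \<subseteq> {b}"
    proof
      fix y assume y: "y \<in> br c b"
      show "y \<in> {b}"
      proof (rule ccontr)
        assume "y \<notin> {b}"
        hence "y \<in> Zs" using emptyZ[OF wd(2) wd(7) y] by simp
        hence "y = b" using Z_uniq bZ by blast
        thus False using \<open>y \<notin> {b}\<close> by simp
      qed
    qed
  qed (use bb in blast)
qed

lemma star_struct: assumes two2: "card S \<ge> 2"
  shows "\<exists>ce z P ch. ce \<in> V \<and> z \<in> {a. adj G ce a} \<and> card {a. adj G ce a} \<ge> 3 \<and> P \<subseteq> {a. adj G ce a} - {z} \<and>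
    (\<forall>a\<in>{a. adj G ce a} - P. \<forall>u. adj G a u \<longrightarrow> u = ce) \<and>
    (\<forall>a\<in>P. adj G a (ch a) \<and> ch a \<noteq> ce \<and> (\<forall>u. adj G a u \<longrightarrow> u = ce \<or> u = ch a) \<and> (\<forall>u. adj G (ch a) u \<longrightarrow> u = a)) \<and>
    V = {ce} \<union> {a. adj G ce a} \<union> ch ` P"
proof -
  obtain t0 where t0: "t0 \<in> S" using two2 by (metis card.empty empty_iff not_numeral_le_zero ex_in_conv)
  obtain ce a0 z where w0: "wit t0 ce a0 z" "ce \<notin> S" using good[OF two2 t0] by blast
  have zZ: "z \<in> Zs" and brz: "br ce z = {z}" using goodZ[OF w0] by auto
  have oz: "adj G ce z" using wit_D[OF w0(1)] by simp
  have oV: "ce \<in> V" using adjV oz by auto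
  have oS: "ce \<notin> S" using w0 by simp
  define N where "N = {a. adj G ce a}"
  have zN: "z \<in> N" using oz N_def by simp
  have finN: "finite N" using finV adjV by (auto simp: N_def intro: finite_subset)
  have zadj: "u = ce" if "adj G z u" for u
  proof -
    have "u \<in> br ce z \<or> u = ce" using br_nbr[OF oz br_a[OF oz] that] by blast
    thus ?thesis using brz that adj_irr by auto
  qed
  have brzS: "br ce z \<inter> S = {}" using brz zZ unfolding Zs_def by auto
  have hub: "\<exists>a. adj G ce a \<and> br ce a \<inter> S = {t}" if tS: "t \<in> S" for t
  proof -
    obtain c a b where w: "wit t c a b" "c \<notin> S" using good[OF two2 tS] by blast
    have "b \<in> Zs" using goodZ[OF w] by simp
    hence "b = z" using Z_uniq zZ by blast
    hence "adj G z c" using wit_D[OF w(1)] adj_sym by blast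
    hence "c = ce" using zadj by blast
    thus ?thesis using wit_D[OF w(1)] by blast
  qed
  have tof: "\<exists>t. br ce a \<inter> S = {t}" if aN: "a \<in> N" "a \<noteq> z" for a
  proof -
    have oa: "adj G ce a" using aN N_def by simp
    have "br ce a \<inter> S \<noteq> {}" using empty2[OF oa oz aN(2)] brzS by blast
    then obtain t where t: "t \<in> br ce a" "t \<in> S" by blast
    obtain a' where a': "adj G ce a'" "br ce a' \<inter> S = {t}" using hub[OF t(2)] by blast
    have "a' = a"
    proof (rule ccontr)
      assume "a' \<noteq> a"
      hence "t \<notin> br ce a'" using br_disj[OF oa a'(1)] t by metis
      thus False using a' by blast
    qed
    thus ?thesis using a' by blast
  qed
  have uniq: "y1 = y2" if aN: "a \<in> N" "a \<noteq> z" and y: "y1 \<in> br ce a" "y2 \<in> br ce a" "y1 \<noteq> a" "y2 \<noteq> a" for a y1 y2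
  proof -
    have oa: "adj G ce a" using aN N_def by simp
    obtain t where t: "br ce a \<inter> S = {t}" using tof[OF aN] by blast
    have W: "y \<in> Ws t" if yb: "y \<in> br ce a" "y \<noteq> t" for y
    proof -
      have yS: "y \<notin> S" using t yb by blast
      have nb: "z' = t" if "z' \<in> S" "adj G y z'" for z'
      proof -
        have "z' \<in> br ce a \<or> z' = ce" using br_nbr[OF oa yb(1) that(2)] by blast
        thus ?thesis using t that(1) oS by blast
      qed
      have "y \<notin> Zs"
      proof
        assume "y \<in> Zs" hence "y = z" using Z_uniq zZ by blast
        hence "y \<in> br ce z" using brz by simp
        thus False using br_disj[OF oa oz aN(2)] yb(1) by blast
      qed
      thus ?thesis using yS nb br_V[OF yb(1)] unfolding Zs_def Ws_def by blast
    qed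
    have aa: "a \<in> br ce a" using br_a[OF oa] .
    show ?thesis
    proof (cases "t = a")
      case True thus ?thesis using W y W_uniq by metis
    next
      case False
      have "a \<in> Ws t" using W aa False by simp
      have "y1 = t"
      proof (rule ccontr)
        assume "y1 \<noteq> t" hence "y1 \<in> Ws t" using W y by blast
        thus False using W_uniq \<open>a \<in> Ws t\<close> y by blast
      qed
      moreover have "y2 = t"
      proof (rule ccontr)
        assume "y2 \<noteq> t" hence "y2 \<in> Ws t" using W y by blast
        thus False using W_uniq \<open>a \<in> Ws t\<close> y by blast
      qed
      ultimately show ?thesis by simp
    qed
  qed
  define P where "P = {a\<in>N. a \<noteq> z \<and> (\<exists>y. y \<in> br ce a \<and> y \<noteq> a)}"
  define ch where "ch a = (SOME y. y \<in> br ce a \<and> y \<noteq> a)" for a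
  have chP: "ch a \<in> br ce a \<and> ch a \<noteq> a" if "a \<in> P" for a
    using that unfolding P_def ch_def by (metis (mono_tags, lifting) mem_Collect_eq someI_ex)
  have PN: "P \<subseteq> N - {z}" unfolding P_def by blast
  have leafs: "\<forall>a\<in>N - P. \<forall>u. adj G a u \<longrightarrow> u = ce"
  proof (intro ballI allI impI)
    fix a u assume a: "a \<in> N - P" and au: "adj G a u"
    have oa: "adj G ce a" using a N_def by simp
    show "u = ce"
    proof (cases "a = z")
      case True thus ?thesis using zadj au by simp
    next
      case False
      have "u \<in> br ce a \<or> u = ce" using br_nbr[OF oa br_a[OF oa] au] by blast
      moreover have "u \<notin> br ce a \<or> u = a" using a False unfolding P_def by blast
      ultimately show ?thesis using au adj_irr by blast
    qed
  qed
  have subd: "\<forall>a\<in>P. adj G a (ch a) \<and> ch a \<noteq> ce \<and> (\<forall>u. adj G a u \<longrightarrow> u = ce \<or> u = ch a) \<and> (\<forall>u. adj G (ch a) u \<longrightarrow> u = a)"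
  proof
    fix a assume aP: "a \<in> P"
    have aN: "a \<in> N" "a \<noteq> z" using aP PN by auto
    have oa: "adj G ce a" using aN N_def by simp
    let ?y = "ch a"
    have y: "?y \<in> br ce a" "?y \<noteq> a" using chP[OF aP] by auto
    have yo: "?y \<noteq> ce" using y br_c[OF oV] by auto
    have yn: "u = a" if "adj G ?y u" for u
    proof -
      have "u \<in> br ce a" using br_nbr[OF oa y(1) that] y(2) by blast
      moreover have "u \<noteq> ?y" using that adj_irr by auto
      ultimately show ?thesis using uniq[OF aN _ y(1)] y(2) by blast
    qed
    have "adj G ?y a"
    proof -
      obtain u where u: "adj G ?y u" "Suc (d u ce) = d ?y ce" using first_step[OF br_V[OF y(1)] oV yo] by blast
      thus ?thesis using yn by blast
    qed
    hence ay: "adj G a ?y" using adj_sym by blast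
    have an: "u = ce \<or> u = ?y" if "adj G a u" for u
    proof -
      have "u \<in> br ce a \<or> u = ce" using br_nbr[OF oa br_a[OF oa] that] by blast
      moreover have "u \<noteq> a" using that adj_irr by auto
      ultimately show ?thesis using uniq[OF aN _ y(1)] y(2) by blast
    qed
    show "adj G a ?y \<and> ?y \<noteq> ce \<and> (\<forall>u. adj G a u \<longrightarrow> u = ce \<or> u = ?y) \<and> (\<forall>u. adj G ?y u \<longrightarrow> u = a)"
      using ay yo an yn by blast
  qed
  have cover: "V = {ce} \<union> N \<union> ch ` P"
  proof
    show "V \<subseteq> {ce} \<union> N \<union> ch ` P"
    proof
      fix v assume vV: "v \<in> V"
      show "v \<in> {ce} \<union> N \<union> ch ` P"
      proof (cases "v = ce \<or> v \<in> N")
        case True thus ?thesis by blast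
      next
        case False
        then obtain a where a: "adj G ce a" "v \<in> br ce a" using br_cover[OF oV vV] by blast
        have aN: "a \<in> N" using a N_def by simp
        have va: "v \<noteq> a" using False aN by blast
        have az: "a \<noteq> z" using a brz va by blast
        have aP: "a \<in> P" using aN az a va unfolding P_def by blast
        have "v = ch a" using uniq[OF aN az a(2)] chP[OF aP] va by blast
        thus ?thesis using aP by blast
      qed
    qed
  next
    have "N \<subseteq> V" using adjV unfolding N_def by auto
    moreover have "ch ` P \<subseteq> V" using chP br_V by blast
    ultimately show "{ce} \<union> N \<union> ch ` P \<subseteq> V" using oV by blast
  qed
  have cardN: "card N \<ge> 3"
  proof -
    define f where "f a = (THE t. br ce a \<inter> S = {t})" for a
    have f: "br ce a \<inter> S = {f a}" if aNz: "a \<in> N - {z}" for a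
    proof -
      obtain t where eq: "br ce a \<inter> S = {t}" using tof aNz by blast
      have "(THE t'. br ce a \<inter> S = {t'}) = t" using eq by (intro the_equality) auto
      thus ?thesis unfolding f_def using eq by simp
    qed
    have "bij_betw f (N - {z}) S"
      unfolding bij_betw_def
    proof
      show "inj_on f (N - {z})"
      proof (rule inj_onI)
        fix a1 a2 assume a: "a1 \<in> N - {z}" "a2 \<in> N - {z}" "f a1 = f a2"
        show "a1 = a2"
        proof (rule ccontr)
          assume "a1 \<noteq> a2"
          moreover have "f a1 \<in> br ce a1" "f a1 \<in> br ce a2" using f a by blast+
          moreover have "adj G ce a1" "adj G ce a2" using a unfolding N_def by auto
          ultimately show False using br_disj by blast
        qed
      qed
      show "f ` (N - {z}) = S"
      proof
        show "f ` (N - {z}) \<subseteq> S" using f by blast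
        show "S \<subseteq> f ` (N - {z})"
        proof
          fix t assume tS: "t \<in> S"
          obtain a where a: "adj G ce a" "br ce a \<inter> S = {t}" using hub[OF tS] by blast
          have "a \<noteq> z" using a brzS by auto
          hence "a \<in> N - {z}" using a N_def by simp
          moreover have "f a = t" using f[OF calculation] a by blast
          ultimately show "t \<in> f ` (N - {z})" by blast
        qed
      qed
    qed
    hence "card (N - {z}) = card S" using bij_betw_same_card by blast
    thus ?thesis using two2 zN finN by (simp add: card_Diff_singleton)
  qed
  show ?thesis
    apply (rule exI[of _ ce], rule exI[of _ z], rule exI[of _ P], rule exI[of _ ch])
    using oV zN cardN PN leafs subd cover unfolding N_def by blast
qed

lemma k1_iso: assumes "card S = 1" shows "graph_iso G (path_graph 2) \<or> graph_iso G (path_graph 3)"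
proof -
  obtain s where sS: "S = {s}" using assms card_1_singletonE by blast
  have sV: "s \<in> V" using SV sS by blast
  have inj: "u = w" if "u \<in> V" "w \<in> V" "cc G u s = cc G w s" for u w
    using AR that sS unfolding ARs_def by blast
  have step: "\<exists>u. adj G v u \<and> u \<in> V" if "v \<in> V" "v \<noteq> s" for v
    using first_step[OF that(1) sV that(2)] adjV by blast
  have cV: "card V = 2 \<or> card V = 3" using k1[OF assms] two by linarith
  thus ?thesis
  proof
    assume "card V = 2"
    then obtain x y where xy: "V = {x,y}" "x \<noteq> y" unfolding card_2_iff by blast
    have "\<exists>p. V = {s,p} \<and> p \<noteq> s"
    proof (cases "s = x")
      case True thus ?thesis using xy by (intro exI[of _ y]) auto
    next
      case False hence "s = y" using xy sV by auto
      thus ?thesis using xy by (intro exI[of _ x]) auto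
    qed
    then obtain p where p: "V = {s,p}" "p \<noteq> s" by blast
    obtain u where u: "adj G p u" "u \<in> V" using step p by blast
    have "u = s" using u p adj_irr by blast
    hence "adj G s p" using u adj_sym by blast
    thus ?thesis using p2[OF p(1)] by blast
  next
    assume "card V = 3"
    then obtain x y z where xyz: "V = {x,y,z}" "x \<noteq> y" "y \<noteq> z" "x \<noteq> z" unfolding card_3_iff by blast
    have "\<exists>p q. V = {s,p,q} \<and> p \<noteq> s \<and> q \<noteq> s \<and> p \<noteq> q"
    proof -
      consider "s = x" | "s = y" | "s = z" using xyz sV by auto
      thus ?thesis
      proof cases
        case 1 thus ?thesis using xyz by (intro exI[of _ y] exI[of _ z]) auto
      next
        case 2 thus ?thesis using xyz by (intro exI[of _ x] exI[of _ z]) auto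
      next
        case 3 thus ?thesis using xyz by (intro exI[of _ x] exI[of _ y]) auto
      qed
    qed
    then obtain p q where pq: "V = {s,p,q}" "p \<noteq> s" "q \<noteq> s" "p \<noteq> q" by blast
    have pV: "p \<in> V" and qV: "q \<in> V" using pq by auto
    have "cc G p s \<noteq> cc G q s" using inj pV qV pq(4) by blast
    moreover have "cc G p s = (if adj G s p then 1 else 2)" unfolding cc_def using pq(2) adj_comm[of p s] by simp
    moreover have "cc G q s = (if adj G s q then 1 else 2)" unfolding cc_def using pq(3) adj_comm[of q s] by simp
    ultimately have "(adj G s p \<and> \<not> adj G s q) \<or> (adj G s q \<and> \<not> adj G s p)"
      by (cases "adj G s p"; cases "adj G s q") auto
    thus ?thesis
    proof
      assume a: "adj G s p \<and> \<not> adj G s q"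
      obtain u where u: "adj G q u" "u \<in> V" using step qV pq by blast
      have "u \<noteq> q" using u adj_irr by blast
      moreover have "u \<noteq> s" using u a adj_sym by blast
      ultimately have "u = p" using u pq by blast
      hence "adj G p q" using u adj_sym by blast
      thus ?thesis using p3[OF pq(1)] a pq by blast
    next
      assume a: "adj G s q \<and> \<not> adj G s p"
      have V': "V = {s,q,p}" using pq by blast
      obtain u where u: "adj G p u" "u \<in> V" using step pV pq by blast
      have "u \<noteq> p" using u adj_irr by blast
      moreover have "u \<noteq> s" using u a adj_sym by blast
      ultimately have "u = q" using u pq by blast
      hence "adj G q p" using u adj_sym by blast
      thus ?thesis using p3[OF V'] a pq by blast
    qed
  qed
qed

end

theorem proposition5p10:
  fixes T :: "'a graph"
  assumes "tree T" and "card (verts T) \<ge> 2"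
  shows "metric_dim T = broadcast_dim T \<longleftrightarrow>
    (graph_iso T (path_graph 2) \<or> graph_iso T (path_graph 3) \<or>
     (\<exists>x S. x \<ge> 3 \<and> S \<subseteq> {1..x} \<and> card S \<le> x - 1 \<and> graph_iso T (subdivided_star x S)))"
proof -
  interpret t: tr T by unfold_locales (rule assms(1))
  show ?thesis
  proof
    assume eq: "metric_dim T = broadcast_dim T"
    obtain S where S: "ARs T S" "card S = metric_dim T" using t.eq_AR[OF eq] by blast
    have minS: "card S \<le> card R" if "resolving_set T R" for R using S(2) t.dim_le[OF that] by simp
    interpret m: mn T S by unfold_locales (use S(1) minS assms(2) in auto)
    have "card S \<noteq> 0"
    proof
      assume "card S = 0"
      hence "S = {}" using m.finS by simp
      obtain u w where "u \<in> verts T" "w \<in> verts T" "u \<noteq> w" using two_elems[OF assms(2)] by blast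
      thus False using S(1) \<open>S = {}\<close> unfolding ARs_def by blast
    qed
    show "graph_iso T (path_graph 2) \<or> graph_iso T (path_graph 3) \<or>
     (\<exists>x S. x \<ge> 3 \<and> S \<subseteq> {1..x} \<and> card S \<le> x - 1 \<and> graph_iso T (subdivided_star x S))"
    proof (cases "card S = 1")
      case True thus ?thesis using m.k1_iso by blast
    next
      case False
      hence "card S \<ge> 2" using \<open>card S \<noteq> 0\<close> by simp
      then obtain ce z P ch where st: "ce \<in> verts T" "z \<in> {a. adj T ce a}" "card {a. adj T ce a} \<ge> 3"
        "P \<subseteq> {a. adj T ce a} - {z}"
        "\<forall>a\<in>{a. adj T ce a} - P. \<forall>u. adj T a u \<longrightarrow> u = ce"
        "\<forall>a\<in>P. adj T a (ch a) \<and> ch a \<noteq> ce \<and> (\<forall>u. adj T a u \<longrightarrow> u = ce \<or> u = ch a) \<and> (\<forall>u. adj T (ch a) u \<longrightarrow> u = a)"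
        "verts T = {ce} \<union> {a. adj T ce a} \<union> ch ` P"
        using m.star_struct by blast
      show ?thesis using t.star_iso[OF st] by blast
    qed
  next
    assume "graph_iso T (path_graph 2) \<or> graph_iso T (path_graph 3) \<or>
     (\<exists>x S. x \<ge> 3 \<and> S \<subseteq> {1..x} \<and> card S \<le> x - 1 \<and> graph_iso T (subdivided_star x S))"
    thus "metric_dim T = broadcast_dim T"
    proof (elim disjE exE conjE)
      assume "graph_iso T (path_graph 2)" thus ?thesis using t.path_back by blast
    next
      assume "graph_iso T (path_graph 3)" thus ?thesis using t.path_back by blast
    next
      fix x S assume "x \<ge> 3" "S \<subseteq> {1..x}" "card S \<le> x - 1" "graph_iso T (subdivided_star x S)"
      thus ?thesis using t.star_back by blast
    qed
  qed
qed

end
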